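(* Fix integers $n,m\ge1$, $k_1,k_2\ge0$. For every $j\in\mathbb{N}$ with $2j\le k_2$ let $c_{k_1,k_2,j}=(-1)^{k_1+k_2}\frac{3^{k_2-j}k_2!}{2^{k_2-2j}(k_2-2j)!\,j!}$. Then \[4^jL_{j,\psi_\omega}a_{k_1,k_2,\omega}=c_{k_1,k_2,j}\,\omega^{k_2-2j}+O(\omega^{k_2-2j+1})\quad\text{as }\omega\to0^+.\]
   Context: Let $u_1$ be the first standard basis vector of $\mathbb{R}^m$. $\theta(\lambda)=\frac{2\lambda-\sin(2\lambda)}{2\sin^2\lambda}$ ($\theta(0)=0$) is an odd increasing diffeomorphism $(-\pi,\pi)\to\mathbb{R}$; for $\omega\ge0$, $y_\omega=\theta^{-1}(\omega)\in[0,\pi)$. For $\lambda\in\mathbb{C}^m$ let $\lambda^2=\sum_j\lambda_j^2$ and, for an even holomorphic function $F$, write $F(\sqrt{\lambda^2})$ for the well-defined holomorphic function $F(\zeta)$, $\zeta^2=\lambda^2$. Let $A(z)=(z/\sinh z)^{n+k_1}\cosh(z)^{k_1}$, $B(z)=z\coth z$ ($A(0)=B(0)=1$), $a_{k_1,k_2}(\lambda)=(-1)^{k_1}i^{k_2}A(\sqrt{\lambda^2})(\lambda,u_1)^{k_2}$, $\phi_\omega(\lambda)=\omega(\lambda,u_1)+iB(\sqrt{\lambda^2})$ (complex bilinear $(\cdot,\cdot)$). For $\lambda\in\mathbb{R}^m$: $a_{k_1,k_2,\omega}(\lambda)=a_{k_1,k_2}(\lambda+iy_\omega u_1)$, $\psi_\omega(\lambda)=\phi_\omega(\lambda+iy_\omega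 u_1)-\phi_\omega(iy_\omega u_1)$. For smooth $f,g$ near $0$ with $f''(0)$ invertible, \[L_{j,f}g=i^{-j}\sum_{\mu=0}^{2j}\frac{(f''(0)^{-1}\partial,\partial)^{\mu+j}\big[(f-P_{2,0}f)^\mu g\big](0)}{2^{\mu+j}\mu!(\mu+j)!},\] with $P_{2,0}f$ the order-$2$ Taylor polynomial of $f$ at $0$ and $(A\partial,\partial)=\sum_{k,l}A_{kl}\partial_k\partial_l$. *)

theory Defs
  imports "HOL-Analysis.Analysis" "HOL-Library.Landau_Symbols"
begin

definition theta :: "real \<Rightarrow> real" where
  "theta l = (if l = 0 then 0 else (2*l - sin (2*l)) / (2 * (sin l)^2))"

definition yom :: "real \<Rightarrow> real" where
  "yom w = (THE y. -pi < y \<and> y < pi \<and> theta y = w)"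

definition Afun :: "nat \<Rightarrow> nat \<Rightarrow> complex \<Rightarrow> complex" where
  "Afun n k1 z = (if z = 0 then 1 else (z / sinh z)^(n+k1) * (cosh z)^k1)"

definition Bfun :: "complex \<Rightarrow> complex" where
  "Bfun z = (if z = 0 then 1 else z * (cosh z / sinh z))"

text \<open>complex bilinear form on C^m, lambda^2, and F(sqrt(lambda^2)) for even F\<close>
definition cbil :: "complex^'m::finite \<Rightarrow> complex^'m \<Rightarrow> complex" where
  "cbil v w = (\<Sum>k\<in>UNIV. v$k * w$k)"

definition csq :: "complex^'m::finite \<Rightarrow> complex" where
  "csq v = cbil v v"

definition evenapp :: "(complex \<Rightarrow> complex) \<Rightarrow> complex^'m::finite \<Rightarrow> complex" where
  "evenapp F v = F (csqrt (csq v))"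

definition cvec :: "real^'m::finite \<Rightarrow> complex^'m" where
  "cvec x = (\<chi> k. complex_of_real (x$k))"

text \<open>u1 is the basis vector axis i 1 (i the distinguished first coordinate)\<close>
definition a_fun :: "nat \<Rightarrow> nat \<Rightarrow> nat \<Rightarrow> 'm::finite \<Rightarrow> complex^'m \<Rightarrow> complex" where
  "a_fun n k1 k2 i v = (-1)^k1 * \<i>^k2 * evenapp (Afun n k1) v * (cbil v (axis i 1))^k2"

definition phi :: "real \<Rightarrow> 'm::finite \<Rightarrow> complex^'m \<Rightarrow> complex" where
  "phi w i v = complex_of_real w * cbil v (axis i 1) + \<i> * evenapp Bfun v"

definition a_om :: "nat \<Rightarrow> nat \<Rightarrow> nat \<Rightarrow> 'm::finite \<Rightarrow> real \<Rightarrow> real^'m \<Rightarrow> complex" where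
  "a_om n k1 k2 i w x = a_fun n k1 k2 i (cvec x + axis i (\<i> * complex_of_real (yom w)))"

definition psi :: "real \<Rightarrow> 'm::finite \<Rightarrow> real^'m \<Rightarrow> complex" where
  "psi w i x = phi w i (cvec x + axis i (\<i> * complex_of_real (yom w)))
              - phi w i (axis i (\<i> * complex_of_real (yom w)))"

definition pd :: "'m::finite \<Rightarrow> (real^'m \<Rightarrow> complex) \<Rightarrow> real^'m \<Rightarrow> complex" where
  "pd k g x = vector_derivative (\<lambda>t. g (x + t *\<^sub>R axis k 1)) (at 0)"

definition hess0 :: "(real^'m::finite \<Rightarrow> complex) \<Rightarrow> complex^'m^'m" where
  "hess0 f = (\<chi> k l. pd k (pd l f) 0)"

definition taylor2 :: "(real^'m::finite \<Rightarrow> complex) \<Rightarrow> real^'m \<Rightarrow> complex" where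
  "taylor2 f x = f 0 + (\<Sum>k\<in>UNIV. pd k f 0 * complex_of_real (x$k))
      + (1/2) * (\<Sum>k\<in>UNIV. \<Sum>l\<in>UNIV. pd k (pd l f) 0 * complex_of_real (x$k) * complex_of_real (x$l))"

definition Dop :: "complex^'m^'m \<Rightarrow> (real^'m::finite \<Rightarrow> complex) \<Rightarrow> real^'m \<Rightarrow> complex" where
  "Dop A h x = (\<Sum>k\<in>UNIV. \<Sum>l\<in>UNIV. A$k$l * pd k (pd l h) x)"

definition Lop :: "nat \<Rightarrow> (real^'m::finite \<Rightarrow> complex) \<Rightarrow> (real^'m \<Rightarrow> complex) \<Rightarrow> complex" where
  "Lop j f g = inverse (\<i>^j) *
     (\<Sum>\<mu>=0..2*j. ((Dop (matrix_inv (hess0 f)) ^^ (\<mu>+j)) (\<lambda>x. (f x - taylor2 f x)^\<mu> * g x)) 0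
        / (2^(\<mu>+j) * fact \<mu> * fact (\<mu>+j)))"

definition ccoef :: "nat \<Rightarrow> nat \<Rightarrow> nat \<Rightarrow> real" where
  "ccoef k1 k2 j = (-1)^(k1+k2) * 3^(k2-j) * fact k2 / (2^(k2-2*j) * fact (k2-2*j) * fact j)"

end

theory Submission
  imports Defs "HOL-Real_Asymp.Real_Asymp" "HOL-Complex_Analysis.Complex_Analysis"
begin

lemma theta_formula: "l \<noteq> 0 \<Longrightarrow> theta l = (2*l - sin (2*l)) / (2 * (sin l)^2)"
  by (simp add: theta_def)

lemma theta_odd: "theta (-l) = - theta l"
  by (simp add: theta_def divide_simps)

lemma sin_lt_x: "0 < (x::real) \<Longrightarrow> sin x < x"
proof (cases "x > 1")
  case True then show ?thesis using sin_le_one[of x] by linarith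
next
  case False
  assume x: "0 < x"
  have "(\<lambda>t. t - sin t) 0 < (\<lambda>t. t - sin t) x"
  proof (rule DERIV_pos_imp_increasing_open[OF x])
    fix t :: real assume t: "0 < t" "t < x"
    have "cos t < cos 0" using t False pi_gt3 by (intro cos_monotone_0_pi) auto
    then show "\<exists>y. ((\<lambda>t. t - sin t) has_real_derivative y) (at t) \<and> 0 < y"
      by (intro exI[of _ "1 - cos t"]) (auto intro!: derivative_eq_intros)
  next
    show "continuous_on {0..x} (\<lambda>t. t - sin t)" by (intro continuous_intros)
  qed
  then show ?thesis by simp
qed

lemma theta_pos: "0 < l \<Longrightarrow> l < pi \<Longrightarrow> theta l > 0"
  using sin_lt_x[of "2*l"] sin_gt_zero[of l] by (simp add: theta_formula)

lemma g_pos: assumes "0 < y" "y < pi" shows "sin y - y * cos y > 0"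
proof -
  have "(\<lambda>t. sin t - t * cos t) 0 < (\<lambda>t. sin t - t * cos t) y"
  proof (rule DERIV_pos_imp_increasing_open[OF assms(1)])
    fix t :: real assume t: "0 < t" "t < y"
    have "sin t > 0" using t assms by (intro sin_gt_zero) auto
    then show "\<exists>d. ((\<lambda>t. sin t - t * cos t) has_real_derivative d) (at t) \<and> 0 < d"
      using t by (intro exI[of _ "t * sin t"]) (auto intro!: derivative_eq_intros)
  next
    show "continuous_on {0..y} (\<lambda>t. sin t - t * cos t)" by (intro continuous_intros)
  qed
  then show ?thesis by simp
qed

lemma theta_deriv_pos:
  assumes "0 < l" "l < pi" shows "\<exists>d. (theta has_real_derivative d) (at l) \<and> d > 0"
proof -
  define sn where "sn = sin l"
  define cs where "cs = cos l"
  have sn: "sn > 0" using assms sin_gt_zero sn_def by auto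
  have g: "sn - l * cs > 0" using g_pos[OF assms] sn_def cs_def by simp
  have df: "((\<lambda>l. 2 * l - sin(2 * l)) has_real_derivative (2 - 2 * cos(2 * l))) (at l)"
    by (auto intro!: derivative_eq_intros)
  have dg: "((\<lambda>l. 2 * (sin l)^2) has_real_derivative (4 * sin l * cos l)) (at l)"
    by (auto intro!: derivative_eq_intros)
  have der: "((\<lambda>l. (2 * l - sin (2 * l)) / (2 * (sin l)^2)) has_real_derivative
     (((2 - 2 * cos(2 * l)) * (2 * (sin l)^2) - (2 * l - sin(2 * l)) * (4 * sin l * cos l)) / (2 * (sin l)^2)^2)) (at l)"
    using DERIV_quotient[OF df dg] sn sn_def by (simp add: mult.commute power2_eq_square)
  have c2: "cos(2 * l) = 1 - 2 * sn^2" unfolding sn_def by (rule cos_double_sin)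
  have s2: "sin(2 * l) = 2 * sn * cs" unfolding sn_def cs_def by (rule sin_double)
  have sc: "cs^2 = 1 - sn^2" unfolding sn_def cs_def using sin_cos_squared_add[of l] by linarith
  have num: "(2 - 2 * (1 - 2 * sn^2)) * (2 * sn^2) - (2 * l - 2 * sn * cs) * (4 * sn * cs) = 8 * sn * (sn - l * cs)"
  proof -
    have "(2 - 2 * (1 - 2 * sn^2)) * (2 * sn^2) - (2 * l - 2 * sn * cs) * (4 * sn * cs) = 8 * sn^4 - 8 * l * sn * cs + 8 * sn^2 * cs^2"
      by (simp add: algebra_simps power2_eq_square power4_eq_xxxx)
    also have "\<dots> = 8 * sn^4 - 8 * l * sn * cs + 8 * sn^2 * (1-sn^2)" by (simp add: sc)
    also have "\<dots> = 8 * sn * (sn - l * cs)" by (simp add: algebra_simps power2_eq_square power4_eq_xxxx)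
    finally show ?thesis .
  qed
  have "((2 - 2 * cos(2 * l)) * (2 * (sin l)^2) - (2 * l - sin(2 * l)) * (4 * sin l * cos l)) / (2 * (sin l)^2)^2
      = 8 * sn * (sn - l * cs) / (2 * sn^2)^2"
    unfolding c2 s2 num[symmetric] by (simp add: sn_def cs_def)
  moreover have "8 * sn * (sn - l * cs) / (2 * sn^2)^2 > 0" using sn g by simp
  moreover have "(theta has_real_derivative
     (((2 - 2 * cos(2 * l)) * (2 * (sin l)^2) - (2 * l - sin(2 * l)) * (4 * sin l * cos l)) / (2 * (sin l)^2)^2)) (at l)"
    by (rule has_field_derivative_transform_within_open[OF der, of "{0<..}"])
       (use assms in \<open>auto simp: theta_formula\<close>)
  ultimately show ?thesis by metis
qed

lemma theta_strict_mono: "0 < a \<Longrightarrow> a < b \<Longrightarrow> b < pi \<Longrightarrow> theta a < theta b"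
  by (rule DERIV_pos_imp_increasing) (auto intro!: theta_deriv_pos)

lemma theta_cont: assumes "-pi < l" "l < pi" shows "isCont theta l"
proof (cases "l = 0")
  case True
  have "((\<lambda>y::real. (2*y - sin (2*y)) / (2 * (sin y)^2)) \<longlongrightarrow> 0) (at 0)"
    by real_asymp
  then have "(theta \<longlongrightarrow> 0) (at 0)"
    by (rule Lim_transform_eventually) (auto simp: eventually_at_filter theta_formula)
  then show ?thesis using True by (simp add: isCont_def theta_def)
next
  case False
  have "sin l \<noteq> 0"
  proof (cases "l > 0")
    case True then show ?thesis using sin_gt_zero[of l] assms by auto
  next
    case f: False then have "sin (-l) > 0" using False assms by (intro sin_gt_zero) auto
    then show ?thesis by auto
  qed
  then have cont: "isCont (\<lambda>y::real. (2*y - sin (2*y)) / (2 * (sin y)^2)) l"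
    by (intro continuous_intros) simp
  moreover have ev: "eventually (\<lambda>y. theta y = (2*y - sin (2*y)) / (2 * (sin y)^2)) (nhds l)"
  proof -
    have "eventually (\<lambda>y. y \<in> -{0}) (nhds l)"
      using False by (intro eventually_nhds_in_open) auto
    then show ?thesis by (rule eventually_mono) (simp add: theta_formula)
  qed
  ultimately show ?thesis using isCont_cong[OF ev] cont by simp
qed

lemma theta_asym: "(\<lambda>y. theta y - 2*y/3) \<in> O[at_right 0](\<lambda>y. y^3)"
proof -
  have 1: "(\<lambda>y::real. (2*y - sin (2*y)) / (2 * (sin y)^2) - 2*y/3) \<in> O[at_right 0](\<lambda>y. y^3)"
    by real_asymp
  have ev: "eventually (\<lambda>y::real. (2*y - sin (2*y)) / (2 * (sin y)^2) - 2*y/3 = theta y - 2*y/3) (at_right 0)"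
    using eventually_at_right_less[of "0::real"] by (rule eventually_mono) (simp add: theta_formula)
  show ?thesis using landau_o.big.in_cong[OF ev] 1 by simp
qed

lemma yom_theta: assumes "0 < y" "y < pi" shows "yom (theta y) = y"
  unfolding yom_def
proof (rule the_equality)
  show "- pi < y \<and> y < pi \<and> theta y = theta y" using assms by auto
next
  fix z assume z: "- pi < z \<and> z < pi \<and> theta z = theta y"
  have ty: "theta y > 0" using theta_pos assms by auto
  show "z = y"
  proof (rule ccontr)
    assume ne: "z \<noteq> y"
    consider "z = 0" | "z < 0" | "0 < z \<and> z < y" | "y < z" using ne by linarith
    then show False
    proof cases
      case 1 then show ?thesis using z ty by (simp add: theta_def)
    next
      case 2 then have "theta (-z) > 0" using z by (intro theta_pos) auto
      then show ?thesis using z ty theta_odd[of z] by simp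
    next
      case 3 then show ?thesis using theta_strict_mono[of z y] z assms by simp
    next
      case 4 then show ?thesis using theta_strict_mono[of y z] z assms by simp
    qed
  qed
qed

lemma theta_ge: "eventually (\<lambda>y. theta y \<ge> y/2) (at_right 0)"
proof -
  have 1: "eventually (\<lambda>y::real. (2*y - sin (2*y)) / (2 * (sin y)^2) \<ge> y/2) (at_right 0)"
    by real_asymp
  show ?thesis using eventually_conj[OF 1 eventually_at_right_less[of "0::real"]]
    by (rule eventually_mono) (simp add: theta_formula)
qed

lemma yom_props: "\<exists>\<epsilon>>0. \<forall>w. 0 < w \<and> w < \<epsilon> \<longrightarrow>
   0 < yom w \<and> yom w < 1 \<and> theta (yom w) = w \<and> yom w \<le> 2*w"
proof -
  obtain b where b: "b > 0" "\<And>y. y > 0 \<Longrightarrow> y < b \<Longrightarrow> theta y \<ge> y/2"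
    using theta_ge unfolding eventually_at_right_field by auto
  define e where "e = min (b/2) 1"
  have e: "0 < e" "e < b" "e \<le> 1" using b by (auto simp: e_def)
  have epi: "e < pi" using e pi_gt3 by linarith
  have te: "theta e > 0" using theta_pos[OF e(1) epi] .
  have "0 < yom w \<and> yom w < 1 \<and> theta (yom w) = w \<and> yom w \<le> 2*w"
    if w: "0 < w \<and> w < theta e" for w
  proof -
    have "\<exists>x. 0 \<le> x \<and> x \<le> e \<and> theta x = w"
    proof (rule IVT)
      show "theta 0 \<le> w" using w by (simp add: theta_def)
      show "w \<le> theta e" using w by simp
      show "0 \<le> e" using e by simp
      show "\<forall>x. 0 \<le> x \<and> x \<le> e \<longrightarrow> isCont theta x"
        using epi pi_gt3 by (auto intro!: theta_cont)
    qed
    then obtain y where y: "0 \<le> y" "y \<le> e" "theta y = w" by blast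
    have y0: "y \<noteq> 0" using y w by (auto simp: theta_def)
    have y1: "0 < y" "y < pi" using y y0 epi by auto
    have yom: "yom w = y" using yom_theta[OF y1] y by simp
    have "y \<noteq> e" using theta_strict_mono w y by auto
    then have "y < 1" using y e by linarith
    moreover have "y/2 \<le> w" using b(2)[of y] y1 y e by simp
    ultimately show "0 < yom w \<and> yom w < 1 \<and> theta (yom w) = w \<and> yom w \<le> 2*w"
      using yom y1 y by simp
  qed
  then show ?thesis using te by blast
qed

lemma yom_ev: "eventually (\<lambda>w. 0 < yom w \<and> yom w < 1 \<and> theta (yom w) = w \<and> yom w \<le> 2*w) (at_right 0)"
proof -
  obtain e where e: "e > 0" "\<forall>w. 0 < w \<and> w < e \<longrightarrow>
      0 < yom w \<and> yom w < 1 \<and> theta (yom w) = w \<and> yom w \<le> 2*w"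
    using yom_props by blast
  show ?thesis unfolding eventually_at_right_field using e by blast
qed

lemma yom_filterlim: "filterlim yom (at_right 0) (at_right 0)"
  unfolding filterlim_at
proof
  show "eventually (\<lambda>w. yom w \<in> {0<..} \<and> yom w \<noteq> 0) (at_right 0)"
    using yom_ev by (rule eventually_mono) auto
  have l2: "((\<lambda>w::real. 2*w) \<longlongrightarrow> 0) (at_right 0)"
    by (intro tendsto_eq_intros) (auto intro: tendsto_ident_at)
  show "(yom \<longlongrightarrow> 0) (at_right 0)"
  proof (rule tendsto_sandwich[of "\<lambda>w. 0" yom _ "\<lambda>w. 2*w"])
    show "eventually (\<lambda>w. 0 \<le> yom w) (at_right 0)" using yom_ev by (rule eventually_mono) auto
    show "eventually (\<lambda>w. yom w \<le> 2*w) (at_right 0)" using yom_ev by (rule eventually_mono) auto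
  qed (use l2 in auto)
qed

lemma yom_bigo: "yom \<in> O[at_right 0](\<lambda>w. w)"
proof (rule bigoI[of _ 2])
  show "eventually (\<lambda>w. norm (yom w) \<le> 2 * norm w) (at_right 0)"
    using eventually_conj[OF yom_ev eventually_at_right_less[of "0::real"]]
    by (rule eventually_mono) auto
qed

lemma yom_asym: "(\<lambda>w. yom w - 3/2 * w) \<in> O[at_right 0](\<lambda>w. w^2)"
proof -
  have 1: "(\<lambda>w. theta (yom w) - 2 * yom w / 3) \<in> O[at_right 0](\<lambda>w. yom w ^ 3)"
    using landau_o.big.compose[OF theta_asym yom_filterlim] by simp
  have ev: "eventually (\<lambda>w. theta (yom w) - 2 * yom w / 3 = - (2/3) * (yom w - 3/2 * w)) (at_right 0)"
    using yom_ev by (rule eventually_mono) (auto simp: algebra_simps)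
  have 2: "(\<lambda>w. - (2/3) * (yom w - 3/2 * w)) \<in> O[at_right 0](\<lambda>w. yom w ^ 3)"
    using landau_o.big.in_cong[OF ev] 1 by simp
  have 3: "(\<lambda>w. yom w - 3/2 * w) \<in> O[at_right 0](\<lambda>w. yom w ^ 3)"
    using 2 by (subst (asm) landau_o.big.cmult_in_iff) auto
  have 4: "(\<lambda>w. yom w ^ 3) \<in> O[at_right 0](\<lambda>w. w ^ 3)"
    by (intro landau_o.big_power yom_bigo)
  have 5: "(\<lambda>w::real. w ^ 3) \<in> O[at_right 0](\<lambda>w. w ^ 2)" by real_asymp
  show ?thesis using landau_o.big.trans[OF 3 landau_o.big.trans[OF 4 5]] .
qed


definition cC :: "nat \<Rightarrow> complex" where "cC n = inverse (fact (2*n))"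
definition cS :: "nat \<Rightarrow> complex" where "cS n = inverse (fact (2*n+1))"
definition Cser :: "complex \<Rightarrow> complex" where "Cser z = (\<Sum>n. cC n * z^n)"
definition Sser :: "complex \<Rightarrow> complex" where "Sser z = (\<Sum>n. cS n * z^n)"

lemma summable_cC: "summable (\<lambda>n. cC n * z^n)"
proof (rule summable_comparison_test[OF _ summable_exp[of "norm z"]])
  show "\<exists>N. \<forall>n\<ge>N. norm (cC n * z ^ n) \<le> inverse (fact n) * norm z ^ n"
  proof (intro exI allI impI)
    fix n :: nat
    have "(fact n :: real) \<le> fact (2*n)" by (intro fact_mono) auto
    then have "inverse (fact (2*n) :: real) \<le> inverse (fact n)"
      by (intro le_imp_inverse_le) auto
    then show "norm (cC n * z ^ n) \<le> inverse (fact n) * norm z ^ n"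
      unfolding cC_def by (simp add: norm_mult norm_power norm_inverse norm_fact mult_right_mono del: fact_Suc)
  qed
qed

lemma summable_cS: "summable (\<lambda>n. cS n * z^n)"
proof (rule summable_comparison_test[OF _ summable_exp[of "norm z"]])
  show "\<exists>N. \<forall>n\<ge>N. norm (cS n * z ^ n) \<le> inverse (fact n) * norm z ^ n"
  proof (intro exI allI impI)
    fix n :: nat
    have "(fact n :: real) \<le> fact (2*n+1)" by (intro fact_mono) auto
    then have "inverse (fact (2*n+1) :: real) \<le> inverse (fact n)"
      by (intro le_imp_inverse_le) auto
    then show "norm (cS n * z ^ n) \<le> inverse (fact n) * norm z ^ n"
      unfolding cS_def by (simp add: norm_mult norm_power norm_inverse norm_fact mult_right_mono del: fact_Suc)
  qed
qed

lemma Cser_deriv: "(Cser has_field_derivative (\<Sum>n. diffs cC n * z^n)) (at z)"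
  unfolding Cser_def[abs_def] by (rule termdiffs_strong_converges_everywhere[OF summable_cC])

lemma Sser_deriv: "(Sser has_field_derivative (\<Sum>n. diffs cS n * z^n)) (at z)"
  unfolding Sser_def[abs_def] by (rule termdiffs_strong_converges_everywhere[OF summable_cS])

lemma Cser_0: "Cser 0 = 1" unfolding Cser_def using powser_zero[of cC] by (simp add: cC_def)
lemma Sser_0: "Sser 0 = 1" unfolding Sser_def using powser_zero[of cS] by (simp add: cS_def)

lemma Cser_deriv0: "(Cser has_field_derivative 1/2) (at 0)"
proof -
  have "(\<Sum>n. diffs cC n * (0::complex)^n) = diffs cC 0" by (rule powser_zero)
  also have "\<dots> = 1/2" by (simp add: diffs_def cC_def)
  finally have eq: "(\<Sum>n. diffs cC n * (0::complex)^n) = 1/2" .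
  show ?thesis using Cser_deriv[of 0] unfolding eq .
qed

lemma Sser_deriv0: "(Sser has_field_derivative 1/6) (at 0)"
proof -
  have "(\<Sum>n. diffs cS n * (0::complex)^n) = diffs cS 0" by (rule powser_zero)
  also have "\<dots> = 1/6" by (simp add: diffs_def cS_def fact_numeral)
  finally have eq: "(\<Sum>n. diffs cS n * (0::complex)^n) = 1/6" .
  show ?thesis using Sser_deriv[of 0] unfolding eq .
qed

lemma Cser_holo: "Cser holomorphic_on A"
  using Cser_deriv holomorphic_on_def field_differentiable_def field_differentiable_at_within by blast
lemma Sser_holo: "Sser holomorphic_on A"
  using Sser_deriv holomorphic_on_def field_differentiable_def field_differentiable_at_within by blast

lemma cosh_csqrt: "cosh (csqrt z) = Cser z"
proof -
  let ?x = "csqrt z"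
  have "(\<lambda>n. if even n then ?x ^ n /\<^sub>R fact n else 0) sums cosh ?x" by (rule cosh_converges)
  then have "(\<lambda>n. (\<lambda>n. if even n then ?x ^ n /\<^sub>R fact n else 0) (2*n)) sums cosh ?x"
    by (subst sums_mono_reindex) (auto simp: strict_mono_def elim!: evenE)
  then have "(\<lambda>n. ?x ^ (2*n) /\<^sub>R fact (2*n)) sums cosh ?x" by simp
  moreover have "?x ^ (2*n) /\<^sub>R fact (2*n) = cC n * z^n" for n
  proof -
    have "?x ^ (2*n) = z^n" by (simp only: power_mult power2_csqrt)
    then show ?thesis by (simp add: cC_def scaleR_conv_of_real divide_inverse mult.commute)
  qed
  ultimately have "(\<lambda>n. cC n * z^n) sums cosh ?x" by simp
  then show ?thesis unfolding Cser_def by (simp add: sums_iff)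
qed

lemma sinh_csqrt: assumes "z \<noteq> 0" shows "sinh (csqrt z) / csqrt z = Sser z"
proof -
  let ?x = "csqrt z"
  have x0: "?x \<noteq> 0" using assms by simp
  have "(\<lambda>n. if even n then 0 else ?x ^ n /\<^sub>R fact n) sums sinh ?x" by (rule sinh_converges)
  then have "(\<lambda>n. (\<lambda>n. if even n then 0 else ?x ^ n /\<^sub>R fact n) (2*n+1)) sums sinh ?x"
    by (subst sums_mono_reindex) (auto simp: strict_mono_def elim!: oddE)
  then have "(\<lambda>n. ?x ^ (2*n+1) /\<^sub>R fact (2*n+1)) sums sinh ?x" by simp
  then have "(\<lambda>n. ?x ^ (2*n+1) /\<^sub>R fact (2*n+1) / ?x) sums (sinh ?x / ?x)"
    by (rule sums_divide)
  moreover have "?x ^ (2*n+1) /\<^sub>R fact (2*n+1) / ?x = cS n * z^n" for n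
  proof -
    have "?x ^ (2*n+1) / ?x = z^n" using x0 by (simp only: power_add power_mult power2_csqrt) simp
    then show ?thesis by (simp add: cS_def scaleR_conv_of_real divide_inverse mult.commute mult.left_commute)
  qed
  ultimately have "(\<lambda>n. cS n * z^n) sums (sinh ?x / ?x)" by simp
  then show ?thesis unfolding Sser_def by (simp add: sums_iff)
qed

definition GA :: "nat \<Rightarrow> nat \<Rightarrow> complex \<Rightarrow> complex" where "GA n k1 z = Afun n k1 (csqrt z)"
definition GB :: "complex \<Rightarrow> complex" where "GB z = Bfun (csqrt z)"

lemma GA_eq: "GA n k1 = (\<lambda>z. inverse (Sser z) ^ (n+k1) * Cser z ^ k1)"
proof
  fix z
  show "GA n k1 z = inverse (Sser z) ^ (n+k1) * Cser z ^ k1"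
  proof (cases "z = 0")
    case True then show ?thesis by (simp add: GA_def Afun_def Sser_0 Cser_0)
  next
    case False
    have "csqrt z / sinh (csqrt z) = inverse (sinh (csqrt z) / csqrt z)" by simp
    then show ?thesis using False
      by (simp add: GA_def Afun_def sinh_csqrt cosh_csqrt)
  qed
qed

lemma GB_eq: "GB = (\<lambda>z. Cser z / Sser z)"
proof
  fix z
  show "GB z = Cser z / Sser z"
  proof (cases "z = 0")
    case True then show ?thesis by (simp add: GB_def Bfun_def Sser_0 Cser_0)
  next
    case False
    have "csqrt z * (cosh (csqrt z) / sinh (csqrt z)) = cosh (csqrt z) / (sinh (csqrt z) / csqrt z)"
      by simp
    then show ?thesis using False
      by (simp add: GB_def Bfun_def sinh_csqrt cosh_csqrt)
  qed
qed

lemma Sser_nz: assumes "norm z < 1" shows "Sser z \<noteq> 0"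
proof (cases "z = 0")
  case True then show ?thesis by (simp add: Sser_0)
next
  case False
  let ?x = "csqrt z"
  have x0: "?x \<noteq> 0" using False by simp
  have nx: "norm ?x < 1" using real_sqrt_less_mono[OF assms] by simp
  have "sinh ?x \<noteq> 0"
  proof
    assume "sinh ?x = 0"
    then have "exp ?x = exp (- ?x)" by (simp add: sinh_def)
    then have "exp (2 * ?x) = 1"
      by (metis exp_minus_inverse exp_not_eq_zero mult_2 exp_add right_inverse)
    then obtain n :: int where r: "Re (2 * ?x) = 0" and i: "Im (2 * ?x) = of_int (2*n) * pi"
      by (auto simp: exp_eq_1)
    have "\<bar>Im ?x\<bar> < 1" using nx abs_Im_le_cmod[of ?x] by linarith
    then have "\<bar>of_int n * pi\<bar> < 1" using i by simp
    then have lt: "\<bar>real_of_int n\<bar> * pi < 1" by (simp add: abs_mult)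
    have "n = 0"
    proof (rule ccontr)
      assume "n \<noteq> 0"
      then have "1 \<le> \<bar>real_of_int n\<bar>" by linarith
      then have "1 * pi \<le> \<bar>real_of_int n\<bar> * pi" by (intro mult_right_mono) auto
      then show False using lt pi_gt3 by linarith
    qed
    then have "?x = 0" using r i by (simp add: complex_eq_iff)
    then show False using x0 by simp
  qed
  then show ?thesis using sinh_csqrt[OF False] x0 by auto
qed

lemma GA_holo: "GA n k1 holomorphic_on ball 0 1"
  unfolding GA_eq using Sser_nz by (auto intro!: holomorphic_intros Sser_holo Cser_holo)

lemma GB_holo: "GB holomorphic_on ball 0 1"
  unfolding GB_eq using Sser_nz by (auto intro!: holomorphic_intros Sser_holo Cser_holo)

lemma GA_0: "GA n k1 0 = 1" by (simp add: GA_eq Sser_0 Cser_0)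
lemma GB_0: "GB 0 = 1" by (simp add: GB_eq Sser_0 Cser_0)

lemma GB_deriv0: "deriv GB 0 = 1/3"
proof -
  have "((\<lambda>z. Cser z / Sser z) has_field_derivative (1/2 * Sser 0 - 1/6 * Cser 0) / (Sser 0 ^ 2)) (at 0)"
    using DERIV_quotient[OF Cser_deriv0 Sser_deriv0] Sser_0 by (simp add: mult.commute)
  then have "(GB has_field_derivative 1/3) (at 0)" by (simp add: GB_eq Sser_0 Cser_0)
  then show ?thesis by (rule DERIV_imp_deriv)
qed


definition inR :: "real \<Rightarrow> real^'m::finite \<Rightarrow> bool" where
  "inR y x \<longleftrightarrow> \<bar>y\<bar> < 1/4 \<and> norm x < 1/4"

inductive sm :: "(real \<Rightarrow> real^'m::finite \<Rightarrow> complex) \<Rightarrow> bool" where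
  sm_coef: "continuous_on {-1/4<..<1/4} c \<Longrightarrow> sm (\<lambda>y x. c y)"
| sm_coord: "sm (\<lambda>y x. of_real (x$k))"
| sm_add: "sm f \<Longrightarrow> sm g \<Longrightarrow> sm (\<lambda>y x. f y x + g y x)"
| sm_mult: "sm f \<Longrightarrow> sm g \<Longrightarrow> sm (\<lambda>y x. f y x * g y x)"
| sm_comp: "sm f \<Longrightarrow> (\<forall>y x. inR y x \<longrightarrow> f y x \<in> ball 0 1) \<Longrightarrow> F holomorphic_on ball 0 1
            \<Longrightarrow> sm (\<lambda>y x. F (f y x))"

lemma sm_deriv:
  fixes h :: "real \<Rightarrow> real^'m::finite \<Rightarrow> complex"
  assumes "sm h"
  shows "\<exists>h'. sm h' \<and> (\<forall>y x. inR y x \<longrightarrow>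
           ((\<lambda>t. h y (x + t *\<^sub>R axis k 1)) has_vector_derivative h' y x) (at 0))"
  using assms
proof induction
  case (sm_coef c)
  have "sm (\<lambda>y x. 0)" by (rule sm.sm_coef) simp
  then show ?case by (intro exI[of _ "\<lambda>y x. 0"]) simp
next
  case (sm_coord l)
  have "((\<lambda>t. complex_of_real ((x + t *\<^sub>R axis k 1) $ l)) has_vector_derivative
          complex_of_real (axis k 1 $ l)) (at 0)" for x :: "real^'m"
  proof -
    have "((\<lambda>t. x$l + t * axis k 1 $ l) has_real_derivative axis k 1 $ l) (at 0)"
      using DERIV_cmult_Id[of "axis k 1 $ l"] DERIV_const[of "x$l"] DERIV_add by (fastforce simp: mult.commute)
    then show ?thesis using has_vector_derivative_of_real by fastforce
  qed
  moreover have "sm (\<lambda>y x. complex_of_real (axis k (1::real) $ l))" by (rule sm.sm_coef) simp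
  ultimately show ?case by blast
next
  case (sm_add f g)
  then obtain f' g' where f': "sm f'" "\<forall>y x. inR y x \<longrightarrow>
           ((\<lambda>t. f y (x + t *\<^sub>R axis k 1)) has_vector_derivative f' y x) (at 0)"
    and g': "sm g'" "\<forall>y x. inR y x \<longrightarrow>
           ((\<lambda>t. g y (x + t *\<^sub>R axis k 1)) has_vector_derivative g' y x) (at 0)" by blast
  have "sm (\<lambda>y x. f' y x + g' y x)" using f' g' by (intro sm.sm_add) auto
  moreover have "((\<lambda>t. f y (x + t *\<^sub>R axis k 1) + g y (x + t *\<^sub>R axis k 1)) has_vector_derivative
          (f' y x + g' y x)) (at 0)" if "inR y x" for y x
    using has_vector_derivative_add[OF f'(2)[rule_format, OF that] g'(2)[rule_format, OF that]] .
  ultimately show ?case by blast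
next
  case (sm_mult f g)
  then obtain f' g' where f': "sm f'" "\<forall>y x. inR y x \<longrightarrow>
           ((\<lambda>t. f y (x + t *\<^sub>R axis k 1)) has_vector_derivative f' y x) (at 0)"
    and g': "sm g'" "\<forall>y x. inR y x \<longrightarrow>
           ((\<lambda>t. g y (x + t *\<^sub>R axis k 1)) has_vector_derivative g' y x) (at 0)" by blast
  have "((\<lambda>t. f y (x + t *\<^sub>R axis k 1) * g y (x + t *\<^sub>R axis k 1)) has_vector_derivative
          (f y x * g' y x + f' y x * g y x)) (at 0)" if "inR y x" for y x
    using has_vector_derivative_mult[OF f'(2)[rule_format, OF that] g'(2)[rule_format, OF that]] by simp
  moreover have "sm (\<lambda>y x. f y x * g' y x + f' y x * g y x)"
    using f' g' sm_mult by (intro sm.sm_add sm.sm_mult) auto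
  ultimately show ?case by blast
next
  case (sm_comp f F)
  then obtain f' where f': "sm f'" "\<forall>y x. inR y x \<longrightarrow>
           ((\<lambda>t. f y (x + t *\<^sub>R axis k 1)) has_vector_derivative f' y x) (at 0)" by blast
  have dF: "deriv F holomorphic_on ball 0 1"
    by (rule holomorphic_deriv[OF sm_comp.hyps(3) open_ball])
  have "((\<lambda>t. F (f y (x + t *\<^sub>R axis k 1))) has_vector_derivative
          (f' y x * deriv F (f y x))) (at 0)" if "inR y x" for y x
  proof -
    have "f y x \<in> ball 0 1" using sm_comp.hyps(2) that by blast
    then have "(F has_field_derivative deriv F (f y x)) (at (f y x))"
      by (rule holomorphic_derivI[OF sm_comp.hyps(3) open_ball])
    then have "(F has_field_derivative deriv F (f y x)) (at ((\<lambda>t. f y (x + t *\<^sub>R axis k 1)) 0))"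
      by simp
    from field_vector_diff_chain_at[OF f'(2)[rule_format, OF that] this]
    show ?thesis by (simp add: o_def)
  qed
  moreover have "sm (\<lambda>y x. f' y x * deriv F (f y x))"
    by (rule sm.sm_mult[OF f'(1) sm.sm_comp[OF sm_comp.hyps(1) sm_comp.hyps(2) dF]])
  ultimately show ?case by blast
qed

lemma sm_cont:
  fixes h :: "real \<Rightarrow> real^'m::finite \<Rightarrow> complex"
  assumes "sm h" "norm x < 1/4"
  shows "continuous_on {-1/4<..<1/4} (\<lambda>y. h y x)"
  using assms(1)
proof induction
  case (sm_comp f F)
  have "continuous_on (ball 0 1) F" using sm_comp holomorphic_on_imp_continuous_on by blast
  moreover have "\<forall>y\<in>{-1/4<..<1/4}. f y x \<in> ball 0 1" using sm_comp assms(2) by (auto simp: inR_def)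
  moreover have "continuous_on {-1/4<..<1/4} (\<lambda>y. f y x)" by (rule sm_comp.IH)
  ultimately show ?case by (intro continuous_on_compose2[of "ball 0 1" F "{-1/4<..<1/4}" "\<lambda>y. f y x"]) auto
next
  case (sm_add f g) then show ?case by (intro continuous_on_add)
next
  case (sm_mult f g) then show ?case by (intro continuous_on_mult)
qed simp_all

definition Sm :: "(real \<Rightarrow> real^'m::finite \<Rightarrow> complex) \<Rightarrow> bool" where
  "Sm h \<longleftrightarrow> (\<exists>h0. sm h0 \<and> (\<forall>y x. inR y x \<longrightarrow> h y x = h0 y x))"

lemma sm_Sm: "sm h \<Longrightarrow> Sm h" unfolding Sm_def by blast

lemma open_line: "open {t::real. norm (x + t *\<^sub>R axis k 1 :: real^'m::finite) < 1/4}"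
  by (intro open_Collect_less continuous_intros)

lemma pd_cong:
  fixes h1 h2 :: "real^'m::finite \<Rightarrow> complex"
  assumes "\<And>z. norm z < 1/4 \<Longrightarrow> h1 z = h2 z" "norm x < 1/4"
  shows "pd k h1 x = pd k h2 x"
  unfolding pd_def
proof (rule vector_derivative_cong_eq)
  have "eventually (\<lambda>t. t \<in> {t::real. norm (x + t *\<^sub>R axis k 1) < 1/4}) (nhds 0)"
    using assms(2) by (intro eventually_nhds_in_open open_line) auto
  then show "eventually (\<lambda>t. t \<in> UNIV \<longrightarrow> h1 (x + t *\<^sub>R axis k 1) = h2 (x + t *\<^sub>R axis k 1)) (nhds 0)"
    by (rule eventually_mono) (auto simp: assms(1))
qed auto

lemma Sm_hasderiv:
  fixes h :: "real \<Rightarrow> real^'m::finite \<Rightarrow> complex"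
  assumes "Sm h" "inR y x"
  shows "((\<lambda>t. h y (x + t *\<^sub>R axis k 1)) has_vector_derivative pd k (h y) x) (at 0)"
proof -
  obtain h0 where h0: "sm h0" "\<And>y x. inR y x \<Longrightarrow> h y x = h0 y x" using assms(1) Sm_def by blast
  obtain h' where h': "sm h'" "\<forall>y x. inR y x \<longrightarrow>
           ((\<lambda>t. h0 y (x + t *\<^sub>R axis k 1)) has_vector_derivative h' y x) (at 0)"
    using sm_deriv[OF h0(1)] by blast
  have d: "((\<lambda>t. h y (x + t *\<^sub>R axis k 1)) has_vector_derivative h' y x) (at 0)"
  proof (rule has_vector_derivative_transform_within_open[OF h'(2)[rule_format, OF assms(2)] open_line])
    show "0 \<in> {t. norm (x + t *\<^sub>R axis k 1) < 1/4}" using assms(2) by (simp add: inR_def)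
    fix t assume "t \<in> {t. norm (x + t *\<^sub>R axis k 1) < 1/4}"
    then show "h0 y (x + t *\<^sub>R axis k 1) = h y (x + t *\<^sub>R axis k 1)"
      using h0(2) assms(2) by (auto simp: inR_def)
  qed
  then have "pd k (h y) x = h' y x" unfolding pd_def by (rule vector_derivative_at)
  then show ?thesis using d by simp
qed

lemma Sm_pd:
  fixes h :: "real \<Rightarrow> real^'m::finite \<Rightarrow> complex"
  assumes "Sm h" shows "Sm (\<lambda>y. pd k (h y))"
proof -
  obtain h0 where h0: "sm h0" "\<And>y x. inR y x \<Longrightarrow> h y x = h0 y x" using assms(1) Sm_def by blast
  obtain h' where h': "sm h'" "\<forall>y x. inR y x \<longrightarrow>
           ((\<lambda>t. h0 y (x + t *\<^sub>R axis k 1)) has_vector_derivative h' y x) (at 0)"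
    using sm_deriv[OF h0(1)] by blast
  have "pd k (h y) x = h' y x" if "inR y x" for y x
  proof -
    have "pd k (h y) x = pd k (h0 y) x"
      using that h0(2) by (intro pd_cong) (auto simp: inR_def)
    also have "\<dots> = h' y x" unfolding pd_def using h'(2) that by (intro vector_derivative_at) auto
    finally show ?thesis .
  qed
  then show ?thesis unfolding Sm_def using h'(1) by blast
qed

lemma Sm_cont:
  fixes h :: "real \<Rightarrow> real^'m::finite \<Rightarrow> complex"
  assumes "Sm h" "norm x < 1/4"
  shows "continuous_on {-1/4<..<1/4} (\<lambda>y. h y x)"
proof -
  obtain h0 where h0: "sm h0" "\<And>y x. inR y x \<Longrightarrow> h y x = h0 y x" using assms(1) Sm_def by blast
  have "continuous_on {-1/4<..<1/4} (\<lambda>y. h0 y x)" by (rule sm_cont[OF h0(1) assms(2)])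
  then show ?thesis by (rule continuous_on_cong[THEN iffD1, rotated 2]) (use h0(2) assms(2) in \<open>auto simp: inR_def\<close>)
qed

lemma Sm_coef: "continuous_on {-1/4<..<1/4} c \<Longrightarrow> Sm (\<lambda>y x. c y)"
  by (intro sm_Sm sm_coef)
lemma Sm_const: "Sm (\<lambda>y x. c)"
  by (intro Sm_coef continuous_intros)
lemma Sm_coord: "Sm (\<lambda>y x. of_real (x$k))"
  by (intro sm_Sm sm_coord)
lemma Sm_add: "Sm f \<Longrightarrow> Sm g \<Longrightarrow> Sm (\<lambda>y x. f y x + g y x)"
  unfolding Sm_def by (auto intro!: sm_add)
lemma Sm_mult: "Sm f \<Longrightarrow> Sm g \<Longrightarrow> Sm (\<lambda>y x. f y x * g y x)"
  unfolding Sm_def by (auto intro!: sm_mult)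
lemma Sm_comp:
  assumes "Sm f" "\<And>y x. inR y x \<Longrightarrow> f y x \<in> ball 0 1" "F holomorphic_on ball 0 1"
  shows "Sm (\<lambda>y x. F (f y x))"
proof -
  obtain h0 where h0: "sm h0" "\<And>y x. inR y x \<Longrightarrow> f y x = h0 y x" using assms(1) Sm_def by blast
  have "\<forall>y x. inR y x \<longrightarrow> h0 y x \<in> ball 0 1" using h0(2) assms(2) by metis
  then have "sm (\<lambda>y x. F (h0 y x))" by (rule sm_comp[OF h0(1) _ assms(3)])
  then show ?thesis unfolding Sm_def using h0 by auto
qed
lemma Sm_minus: "Sm f \<Longrightarrow> Sm (\<lambda>y x. - f y x)"
  using Sm_mult[OF Sm_const[of "-1"]] by simp
lemma Sm_diff: "Sm f \<Longrightarrow> Sm g \<Longrightarrow> Sm (\<lambda>y x. f y x - g y x)"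
  using Sm_add[OF _ Sm_minus] by simp
lemma Sm_power: "Sm f \<Longrightarrow> Sm (\<lambda>y x. f y x ^ n)"
  by (induction n) (auto intro!: Sm_const Sm_mult)
lemma Sm_sum: "finite A \<Longrightarrow> (\<And>a. a \<in> A \<Longrightarrow> Sm (f a)) \<Longrightarrow> Sm (\<lambda>y x. \<Sum>a\<in>A. f a y x)"
  by (induction A rule: finite_induct) (auto intro!: Sm_const Sm_add)

lemma pd_vd: "((\<lambda>t. h (x + t *\<^sub>R axis k 1)) has_vector_derivative d) (at 0) \<Longrightarrow> pd k h x = d"
  unfolding pd_def by (rule vector_derivative_at)

lemma pd_add:
  assumes "Sm f" "Sm g" "inR y x"
  shows "pd k (\<lambda>x. f y x + g y x) x = pd k (f y) x + pd k (g y) x"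
  by (intro pd_vd has_vector_derivative_add Sm_hasderiv assms)

lemma pd_mult:
  assumes "Sm f" "Sm g" "inR y x"
  shows "pd k (\<lambda>x. f y x * g y x) x = f y x * pd k (g y) x + pd k (f y) x * g y x"
  using has_vector_derivative_mult[OF Sm_hasderiv[OF assms(1,3)] Sm_hasderiv[OF assms(2,3)]]
  by (intro pd_vd) simp

lemma pd_cmult:
  assumes "Sm f" "inR y x"
  shows "pd k (\<lambda>x. c * f y x) x = c * pd k (f y) x"
  by (intro pd_vd has_vector_derivative_mult_right Sm_hasderiv assms)

lemma pd_const: "pd k (\<lambda>x. c) x = 0"
  by (intro pd_vd) simp

lemma pd_coord: "pd k (\<lambda>x. complex_of_real (x$l)) x = (if l = k then 1 else 0)"
proof (rule pd_vd)
  show "((\<lambda>t. complex_of_real ((x + t *\<^sub>R axis k 1) $ l)) has_vector_derivative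
     (if l = k then 1 else 0)) (at 0)"
    by (auto intro!: derivative_eq_intros simp: axis_def)
qed

lemma pd_sum:
  assumes "finite A" "\<And>a. a \<in> A \<Longrightarrow> Sm (f a)" "inR y x"
  shows "pd k (\<lambda>x. \<Sum>a\<in>A. f a y x) x = (\<Sum>a\<in>A. pd k (f a y) x)"
  by (intro pd_vd has_vector_derivative_sum Sm_hasderiv assms)

lemma pd_comp:
  assumes "Sm f" "\<And>y x. inR y x \<Longrightarrow> f y x \<in> ball 0 1" "F holomorphic_on ball 0 1" "inR y x"
  shows "pd k (\<lambda>x. F (f y x)) x = deriv F (f y x) * pd k (f y) x"
proof (rule pd_vd)
  have "(F has_field_derivative deriv F (f y x)) (at (f y x))"
    by (rule holomorphic_derivI[OF assms(3) open_ball assms(2)[OF assms(4)]])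
  then have "(F has_field_derivative deriv F (f y x)) (at ((\<lambda>t. f y (x + t *\<^sub>R axis k 1)) 0))"
    by simp
  from field_vector_diff_chain_at[OF Sm_hasderiv[OF assms(1,4)] this]
  have "((\<lambda>t. F (f y (x + t *\<^sub>R axis k 1))) has_vector_derivative pd k (f y) x * deriv F (f y x)) (at 0)"
    by (simp add: o_def)
  then show "((\<lambda>t. F (f y (x + t *\<^sub>R axis k 1))) has_vector_derivative deriv F (f y x) * pd k (f y) x) (at 0)"
    by (simp only: mult.commute)
qed


fun Dl :: "'m::finite list \<Rightarrow> (real \<Rightarrow> real^'m \<Rightarrow> complex) \<Rightarrow> real \<Rightarrow> real^'m \<Rightarrow> complex" where
  "Dl [] h = h"
| "Dl (k#s) h = Dl s (\<lambda>y. pd k (h y))"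

lemma Sm_Dl: "Sm h \<Longrightarrow> Sm (Dl s h)"
  by (induction s arbitrary: h) (auto intro: Sm_pd)

lemma Dl_append: "Dl (s @ t) h = Dl t (Dl s h)"
  by (induction s arbitrary: h) auto

lemma Dl_cong:
  assumes "\<And>y x. inR y x \<Longrightarrow> f y x = g y x" "inR y x"
  shows "Dl s f y x = Dl s g y x"
  using assms
proof (induction s arbitrary: f g)
  case Nil then show ?case by simp
next
  case (Cons k s)
  have "pd k (f y) x = pd k (g y) x" if "inR y x" for y x
    using Cons.prems(1) that by (intro pd_cong) (auto simp: inR_def)
  then show ?case using Cons.IH[of "\<lambda>y. pd k (f y)" "\<lambda>y. pd k (g y)"] Cons.prems(2) by simp
qed

lemma Dl_add:
  assumes "Sm f" "Sm g" "inR y x"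
  shows "Dl s (\<lambda>y x. f y x + g y x) y x = Dl s f y x + Dl s g y x"
  using assms
proof (induction s arbitrary: f g)
  case Nil then show ?case by simp
next
  case (Cons k s)
  have "Dl (k#s) (\<lambda>y x. f y x + g y x) y x = Dl s (\<lambda>y x. pd k (f y) x + pd k (g y) x) y x"
    using Cons.prems by (simp only: Dl.simps) (rule Dl_cong[OF pd_add])
  also have "\<dots> = Dl s (\<lambda>y. pd k (f y)) y x + Dl s (\<lambda>y. pd k (g y)) y x"
    using Cons.prems by (intro Cons.IH Sm_pd)
  finally show ?case by simp
qed

lemma Dl_cmult:
  assumes "Sm f" "inR y x"
  shows "Dl s (\<lambda>y x. c y * f y x) y x = c y * Dl s f y x"
  using assms
proof (induction s arbitrary: f)
  case Nil then show ?case by simp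
next
  case (Cons k s)
  have "Dl (k#s) (\<lambda>y x. c y * f y x) y x = Dl s (\<lambda>y x. c y * pd k (f y) x) y x"
    using Cons.prems by (simp only: Dl.simps) (rule Dl_cong[OF pd_cmult])
  also have "\<dots> = c y * Dl s (\<lambda>y. pd k (f y)) y x"
    using Cons.prems by (intro Cons.IH Sm_pd)
  finally show ?case by simp
qed

lemma pd_zero: "pd k (\<lambda>x. 0) = (\<lambda>x. 0)"
  using pd_const[of k 0] by auto

lemma Dl_zero: "Dl s (\<lambda>y x. 0) = (\<lambda>y x. 0)"
  by (induction s) (simp_all add: pd_zero)

lemma Dl_coef: "Dl (k#s) (\<lambda>y x. c y) = (\<lambda>y x. 0)"
proof -
  have "(\<lambda>y. pd k (\<lambda>x. c y)) = (\<lambda>y x. 0)" by (simp add: pd_const fun_eq_iff)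
  then show ?thesis by (simp add: Dl_zero)
qed

lemma Dl_sum:
  assumes "finite A" "\<And>a. a \<in> A \<Longrightarrow> Sm (f a)" "inR y x"
  shows "Dl s (\<lambda>y x. \<Sum>a\<in>A. f a y x) y x = (\<Sum>a\<in>A. Dl s (f a) y x)"
  using assms
proof (induction A rule: finite_induct)
  case empty then show ?case by (simp add: Dl_zero)
next
  case (insert a A)
  have "Dl s (\<lambda>y x. \<Sum>a\<in>insert a A. f a y x) y x = Dl s (\<lambda>y x. f a y x + (\<Sum>a\<in>A. f a y x)) y x"
    using insert.hyps by simp
  also have "\<dots> = Dl s (f a) y x + Dl s (\<lambda>y x. \<Sum>a\<in>A. f a y x) y x"
    using insert by (intro Dl_add Sm_sum) auto
  also have "\<dots> = Dl s (f a) y x + (\<Sum>a\<in>A. Dl s (f a) y x)"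
    using insert by simp
  finally show ?case using insert.hyps by simp
qed

definition ord :: "(real \<Rightarrow> real^'m::finite \<Rightarrow> complex) \<Rightarrow> nat \<Rightarrow> bool" where
  "ord h r \<longleftrightarrow> Sm h \<and> (\<forall>s. (\<lambda>y. Dl s h y 0) \<in> O[at_right 0](\<lambda>y. complex_of_real y ^ (r - length s)))"

lemma pow_mono: "b \<le> a \<Longrightarrow> (\<lambda>y. complex_of_real y ^ a) \<in> O[at_right 0](\<lambda>y. complex_of_real y ^ b)"
proof (rule bigoI[of _ "1::real"])
  assume ab: "b \<le> a"
  show "eventually (\<lambda>y. norm (complex_of_real y ^ a) \<le> 1 * norm (complex_of_real y ^ b)) (at_right 0)"
    using eventually_at_right_real[OF zero_less_one]
  proof (rule eventually_mono)
    fix y :: real assume "y \<in> {0<..<1}"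
    then show "norm (complex_of_real y ^ a) \<le> 1 * norm (complex_of_real y ^ b)"
      using ab by (simp add: norm_power power_decreasing)
  qed
qed

lemma ev_inR0: "eventually (\<lambda>y. inR y (0::real^'m::finite)) (at_right 0)"
  using eventually_at_right_real[of 0 "1/4"] by (rule eventually_mono) (auto simp: inR_def)

lemma cont_bigo1:
  assumes "continuous_on {-1/4<..<1/4} (g :: real \<Rightarrow> complex)"
  shows "g \<in> O[at_right 0](\<lambda>y. 1)"
proof (rule bigoI_tendsto[where c = "g 0"])
  have "isCont g 0" using assms by (rule continuous_on_interior) auto
  then have "(g \<longlongrightarrow> g 0) (at_right 0)" by (simp add: isCont_def filterlim_at_split)
  then show "((\<lambda>x. g x / 1) \<longlongrightarrow> g 0) (at_right 0)" by simp
qed simp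

lemma Sm_ord0: "Sm h \<Longrightarrow> ord h 0"
  unfolding ord_def by (auto intro!: cont_bigo1 Sm_cont Sm_Dl)

lemma ord_mono: assumes "ord h r" "r' \<le> r" shows "ord h r'"
  unfolding ord_def
proof (intro conjI allI)
  show "Sm h" using assms ord_def by blast
  fix s :: "'a list"
  have "(\<lambda>y. Dl s h y 0) \<in> O[at_right 0](\<lambda>y. complex_of_real y ^ (r - length s))"
    using assms ord_def by blast
  then show "(\<lambda>y. Dl s h y 0) \<in> O[at_right 0](\<lambda>y. complex_of_real y ^ (r' - length s))"
    by (rule landau_o.big.trans[OF _ pow_mono]) (use assms in simp)
qed

lemma ord_pd: "ord f r \<Longrightarrow> ord (\<lambda>y. pd k (f y)) (r - 1)"
proof -
  assume o: "ord f r"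
  then have "(\<lambda>y. Dl (k#s) f y 0) \<in> O[at_right 0](\<lambda>y. complex_of_real y ^ (r - length (k#s)))" for s
    unfolding ord_def by blast
  moreover have "r - length (k#s) = (r - 1) - length s" for s by simp
  ultimately show ?thesis using o Sm_pd unfolding ord_def by auto
qed

lemma ord_mult_aux:
  fixes s :: "'m::finite list"
  shows "\<forall>(f::real \<Rightarrow> real^'m \<Rightarrow> complex) g r1 r2. ord f r1 \<longrightarrow> ord g r2 \<longrightarrow>
     (\<lambda>y. Dl s (\<lambda>y x. f y x * g y x) y 0) \<in> O[at_right 0](\<lambda>y. complex_of_real y ^ (r1 + r2 - length s))"
proof (induction s)
  case Nil
  show ?case
  proof (intro allI impI)
    fix f g :: "real \<Rightarrow> real^'m \<Rightarrow> complex" and r1 r2 :: nat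
    assume f: "ord f r1" and g: "ord g r2"
    have "(\<lambda>y. f y 0) \<in> O[at_right 0](\<lambda>y. complex_of_real y ^ r1)"
      using f unfolding ord_def by (metis Dl.simps(1) list.size(3) diff_zero)
    moreover have "(\<lambda>y. g y 0) \<in> O[at_right 0](\<lambda>y. complex_of_real y ^ r2)"
      using g unfolding ord_def by (metis Dl.simps(1) list.size(3) diff_zero)
    ultimately have "(\<lambda>y. f y 0 * g y 0) \<in> O[at_right 0](\<lambda>y. complex_of_real y ^ r1 * complex_of_real y ^ r2)"
      by (rule landau_o.big_mult)
    then show "(\<lambda>y. Dl [] (\<lambda>y x. f y x * g y x) y 0) \<in> O[at_right 0](\<lambda>y. complex_of_real y ^ (r1 + r2 - length []))"
      by (simp add: power_add)
  qed
next
  case (Cons k s)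
  show ?case
  proof (intro allI impI)
    fix f g :: "real \<Rightarrow> real^'m \<Rightarrow> complex" and r1 r2 :: nat
    assume f: "ord f r1" and g: "ord g r2"
    have Sf: "Sm f" and Sg: "Sm g" using f g ord_def by auto
    have ev: "eventually (\<lambda>y. Dl (k#s) (\<lambda>y x. f y x * g y x) y 0
        = Dl s (\<lambda>y x. f y x * pd k (g y) x) y 0 + Dl s (\<lambda>y x. pd k (f y) x * g y x) y 0) (at_right 0)"
      using ev_inR0
    proof (rule eventually_mono)
      fix y assume y: "inR y (0::real^'m)"
      have "Dl (k#s) (\<lambda>y x. f y x * g y x) y 0 = Dl s (\<lambda>y x. f y x * pd k (g y) x + pd k (f y) x * g y x) y 0"
        using y by (simp only: Dl.simps) (rule Dl_cong[OF pd_mult[OF Sf Sg]])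
      also have "\<dots> = Dl s (\<lambda>y x. f y x * pd k (g y) x) y 0 + Dl s (\<lambda>y x. pd k (f y) x * g y x) y 0"
        using y Sf Sg by (intro Dl_add Sm_mult Sm_pd)
      finally show "Dl (k#s) (\<lambda>y x. f y x * g y x) y 0
        = Dl s (\<lambda>y x. f y x * pd k (g y) x) y 0 + Dl s (\<lambda>y x. pd k (f y) x * g y x) y 0" .
    qed
    have t1: "(\<lambda>y. Dl s (\<lambda>y x. f y x * pd k (g y) x) y 0) \<in> O[at_right 0](\<lambda>y. complex_of_real y ^ (r1 + (r2 - 1) - length s))"
      using Cons.IH f ord_pd[OF g] by blast
    have t2: "(\<lambda>y. Dl s (\<lambda>y x. pd k (f y) x * g y x) y 0) \<in> O[at_right 0](\<lambda>y. complex_of_real y ^ ((r1 - 1) + r2 - length s))"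
      using Cons.IH g ord_pd[OF f] by blast
    have h1: "(\<lambda>y. Dl s (\<lambda>y x. f y x * pd k (g y) x) y 0) \<in> O[at_right 0](\<lambda>y. complex_of_real y ^ (r1 + r2 - length (k#s)))"
      by (rule landau_o.big.trans[OF t1 pow_mono]) simp
    have h2: "(\<lambda>y. Dl s (\<lambda>y x. pd k (f y) x * g y x) y 0) \<in> O[at_right 0](\<lambda>y. complex_of_real y ^ (r1 + r2 - length (k#s)))"
      by (rule landau_o.big.trans[OF t2 pow_mono]) simp
    have "(\<lambda>y. Dl s (\<lambda>y x. f y x * pd k (g y) x) y 0 + Dl s (\<lambda>y x. pd k (f y) x * g y x) y 0)
        \<in> O[at_right 0](\<lambda>y. complex_of_real y ^ (r1 + r2 - length (k#s)))"
      by (rule sum_in_bigo(1)[OF h1 h2])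
    then show "(\<lambda>y. Dl (k#s) (\<lambda>y x. f y x * g y x) y 0) \<in> O[at_right 0](\<lambda>y. complex_of_real y ^ (r1 + r2 - length (k#s)))"
      using landau_o.big.in_cong[OF ev] by simp
  qed
qed

lemma ord_mult:
  assumes "ord f r1" "ord g r2" shows "ord (\<lambda>y x. f y x * g y x) (r1 + r2)"
proof -
  have "Sm (\<lambda>y x. f y x * g y x)" using assms by (intro Sm_mult) (auto simp: ord_def)
  moreover have "\<forall>s. (\<lambda>y. Dl s (\<lambda>y x. f y x * g y x) y 0) \<in> O[at_right 0](\<lambda>y. complex_of_real y ^ (r1 + r2 - length s))"
    using ord_mult_aux assms by blast
  ultimately show ?thesis unfolding ord_def by blast
qed

lemma ord_power: "ord f r \<Longrightarrow> ord (\<lambda>y x. f y x ^ n) (n * r)"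
proof (induction n)
  case 0 then show ?case by (simp add: Sm_ord0 Sm_const)
next
  case (Suc n)
  then have "ord (\<lambda>y x. f y x * f y x ^ n) (r + n * r)" by (intro ord_mult)
  then show ?case by simp
qed


definition cM :: "complex^'m^'m \<Rightarrow> ('m \<times> 'm) list \<Rightarrow> complex" where
  "cM M ps = (\<Prod>p\<leftarrow>ps. M $ fst p $ snd p)"
definition flat :: "('m \<times> 'm) list \<Rightarrow> 'm list" where
  "flat ps = concat (map (\<lambda>p. [snd p, fst p]) ps)"
definition LL :: "nat \<Rightarrow> ('m::finite \<times> 'm) list set" where
  "LL r = {ps. set ps \<subseteq> UNIV \<and> length ps = r}"

lemma finite_LL: "finite (LL r)"
  unfolding LL_def by (rule finite_lists_length_eq) simp

lemma LL_0: "LL 0 = {[]}" by (auto simp: LL_def)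

lemma length_flat: "length (flat ps) = 2 * length ps"
  by (induction ps) (auto simp: flat_def)

lemma Dop_eq: "Dop M (h y) = (\<lambda>x. \<Sum>k\<in>UNIV. \<Sum>l\<in>UNIV. M$k$l * Dl [l,k] h y x)"
  by (simp add: Dop_def fun_eq_iff)

lemma Dop_pow:
  fixes h :: "real \<Rightarrow> real^'m::finite \<Rightarrow> complex"
  assumes "Sm h" "inR y x"
  shows "(Dop M ^^ r) (h y) x = (\<Sum>ps\<in>LL r. cM M ps * Dl (flat ps) h y x)"
  using assms
proof (induction r arbitrary: h)
  case 0
  then show ?case by (simp add: LL_0 cM_def flat_def)
next
  case (Suc r)
  define h' where "h' = (\<lambda>y x. \<Sum>k\<in>UNIV. \<Sum>l\<in>UNIV. M$k$l * Dl [l,k] h y x)"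
  have Sh': "Sm h'" unfolding h'_def
    by (intro Sm_sum Sm_mult Sm_const Sm_Dl Suc.prems) auto
  have "(Dop M ^^ Suc r) (h y) x = (Dop M ^^ r) (h' y) x"
    by (simp only: funpow_Suc_right o_apply Dop_eq h'_def)
  also have "\<dots> = (\<Sum>ps\<in>LL r. cM M ps * Dl (flat ps) h' y x)"
    by (rule Suc.IH[OF Sh' Suc.prems(2)])
  also have "\<dots> = (\<Sum>ps\<in>LL r. \<Sum>k\<in>UNIV. \<Sum>l\<in>UNIV. cM M ((k,l)#ps) * Dl (flat ((k,l)#ps)) h y x)"
  proof (rule sum.cong[OF refl])
    fix ps :: "('m \<times> 'm) list"
    have "Dl (flat ps) h' y x = (\<Sum>k\<in>UNIV. Dl (flat ps) (\<lambda>y x. \<Sum>l\<in>UNIV. M$k$l * Dl [l,k] h y x) y x)"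
      unfolding h'_def by (rule Dl_sum) (auto intro!: Sm_sum Sm_mult Sm_const Sm_Dl Sm_pd Suc.prems)
    also have "\<dots> = (\<Sum>k\<in>UNIV. \<Sum>l\<in>UNIV. Dl (flat ps) (\<lambda>y x. M$k$l * Dl [l,k] h y x) y x)"
      by (intro sum.cong[OF refl] Dl_sum) (auto intro!: Sm_sum Sm_mult Sm_const Sm_Dl Sm_pd Suc.prems)
    also have "\<dots> = (\<Sum>k\<in>UNIV. \<Sum>l\<in>UNIV. M$k$l * Dl (flat ps) (Dl [l,k] h) y x)"
      by (intro sum.cong[OF refl] Dl_cmult[where c = "\<lambda>_. M$k$l" for k l, simplified]) 
         (auto intro!: Sm_Dl Sm_pd Suc.prems)
    also have "\<dots> = (\<Sum>k\<in>UNIV. \<Sum>l\<in>UNIV. M$k$l * Dl (flat ((k,l)#ps)) h y x)"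
      by (simp add: flat_def Dl_append)
    finally show "cM M ps * Dl (flat ps) h' y x =
        (\<Sum>k\<in>UNIV. \<Sum>l\<in>UNIV. cM M ((k,l)#ps) * Dl (flat ((k,l)#ps)) h y x)"
      by (simp add: cM_def sum_distrib_left mult_ac)
  qed
  also have "\<dots> = (\<Sum>ps\<in>LL r. \<Sum>p\<in>UNIV. cM M (p#ps) * Dl (flat (p#ps)) h y x)"
    by (simp add: sum.cartesian_product UNIV_Times_UNIV[symmetric] del: UNIV_Times_UNIV)
  also have "\<dots> = (\<Sum>q\<in>LL r \<times> UNIV. cM M (snd q # fst q) * Dl (flat (snd q # fst q)) h y x)"
    by (simp add: sum.cartesian_product case_prod_beta)
  also have "\<dots> = (\<Sum>ps\<in>(\<lambda>(xs, n). n#xs) ` (LL r \<times> UNIV). cM M ps * Dl (flat ps) h y x)"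
    by (subst sum.reindex) (auto simp: inj_on_def case_prod_beta)
  also have "(\<lambda>(xs, n). n#xs) ` (LL r \<times> UNIV) = LL (Suc r)"
    unfolding LL_def by (rule lists_length_Suc_eq[symmetric])
  finally show ?case .
qed


definition lft :: "'m::finite \<Rightarrow> real \<Rightarrow> real^'m \<Rightarrow> complex^'m" where
  "lft i y x = cvec x + axis i (\<i> * complex_of_real y)"
definition cf :: "'m::finite \<Rightarrow> 'm \<Rightarrow> real \<Rightarrow> complex" where
  "cf i k y = (if k = i then \<i> * complex_of_real y else 0)"
definition Lk :: "'m::finite \<Rightarrow> 'm \<Rightarrow> real \<Rightarrow> real^'m \<Rightarrow> complex" where
  "Lk i k y x = complex_of_real (x$k) + cf i k y"
definition qf :: "'m::finite \<Rightarrow> real \<Rightarrow> real^'m \<Rightarrow> complex" where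
  "qf i y x = (\<Sum>k\<in>UNIV. Lk i k y x * Lk i k y x)"

lemma lft_nth: "lft i y x $ k = Lk i k y x"
  by (simp add: lft_def cvec_def axis_def Lk_def cf_def)

lemma csq_lft: "csq (lft i y x) = qf i y x"
  by (simp add: csq_def cbil_def qf_def lft_nth)

lemma cbil_lft: "cbil (lft i y x) (axis i 1) = Lk i i y x"
proof -
  have "cbil (lft i y x) (axis i 1) = (\<Sum>k\<in>UNIV. lft i y x $ k * (if k = i then 1 else 0))"
    by (simp add: cbil_def axis_def)
  also have "\<dots> = lft i y x $ i" by (simp add: if_distrib cong: if_cong)
  finally show ?thesis by (simp add: lft_nth)
qed

lemma Lk_i: "Lk i i y x = complex_of_real (x$i) + \<i> * complex_of_real y"
  by (simp add: Lk_def cf_def)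

lemma qf_0: "qf i y 0 = - ((complex_of_real y)^2)"
proof -
  have "qf i y 0 = (\<Sum>k\<in>UNIV. cf i k y * cf i k y)" by (simp add: qf_def Lk_def)
  also have "\<dots> = (\<Sum>k\<in>UNIV. if k = i then (\<i> * complex_of_real y)^2 else 0)"
    by (intro sum.cong) (auto simp: cf_def power2_eq_square)
  also have "\<dots> = - ((complex_of_real y)^2)" by (simp add: power_mult_distrib)
  finally show ?thesis .
qed

lemma cont_cf: "continuous_on A (cf i k)"
  unfolding cf_def[abs_def] by (cases "k = i") (auto intro!: continuous_intros)

lemma Sm_Lk: "Sm (Lk i k)"
  unfolding Lk_def[abs_def] by (intro Sm_add Sm_coord Sm_coef cont_cf)

lemma Sm_qf: "Sm (qf i)"
  unfolding qf_def[abs_def] by (intro Sm_sum Sm_mult Sm_Lk) auto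

lemma norm_cvec: "norm (cvec x) = norm x"
  by (simp add: norm_vec_def cvec_def)

lemma norm_axis_c: "norm (axis i (c::complex)) = norm c"
proof -
  have e: "(norm (axis i c $ k))^2 = (if k = i then (norm c)^2 else 0)" for k
    by (simp add: axis_def)
  have "norm (axis i c) = sqrt (\<Sum>k\<in>UNIV. (norm (axis i c $ k))^2)"
    by (simp add: norm_vec_def L2_set_def)
  also have "\<dots> = sqrt ((norm c)^2)" by (simp only: e sum.delta) simp
  finally show ?thesis by simp
qed

lemma norm_csq: "norm (csq (v::complex^'m::finite)) \<le> (norm v)^2"
proof -
  have "norm (csq v) \<le> (\<Sum>k\<in>UNIV. norm (v$k * v$k))"
    unfolding csq_def cbil_def by (rule norm_sum)
  also have "\<dots> = (\<Sum>k\<in>UNIV. (norm (v$k))^2)" by (simp add: norm_mult power2_eq_square)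
  also have "\<dots> = (norm v)^2"
    by (simp add: norm_vec_def L2_set_def sum_nonneg)
  finally show ?thesis .
qed

lemma qf_ball: assumes "inR y x" shows "qf i y x \<in> ball 0 1"
proof -
  have "norm (lft i y x) \<le> norm x + \<bar>y\<bar>"
    unfolding lft_def using norm_triangle_ineq[of "cvec x" "axis i (\<i> * complex_of_real y)"]
    by (simp add: norm_cvec norm_axis_c norm_mult)
  also have "\<dots> < 1/2" using assms by (simp add: inR_def)
  finally have n: "norm (lft i y x) < 1/2" .
  have "norm (qf i y x) \<le> (norm (lft i y x))^2" using norm_csq csq_lft by metis
  also have "\<dots> \<le> (1/2)^2" using n by (intro power_mono) auto
  finally show ?thesis by (simp add: dist_norm power2_eq_square)
qed

lemma pd_Lk: "pd l (Lk i k y) x = (if k = l then 1 else 0)"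
proof -
  have "pd l (Lk i k y) x = pd l (\<lambda>x. complex_of_real (x$k) + cf i k y) x"
    by (simp add: Lk_def[abs_def])
  also have "\<dots> = (if k = l then 1 else 0)"
    by (rule pd_vd) (auto intro!: derivative_eq_intros simp: axis_def)
  finally show ?thesis .
qed

lemma pd_qf: assumes "inR y x" shows "pd l (qf i y) x = 2 * Lk i l y x"
proof -
  have "pd l (qf i y) x = pd l (\<lambda>x. \<Sum>k\<in>UNIV. Lk i k y x * Lk i k y x) x"
    by (simp add: qf_def[abs_def])
  also have "\<dots> = (\<Sum>k\<in>UNIV. pd l (\<lambda>x. Lk i k y x * Lk i k y x) x)"
    by (rule pd_sum) (auto intro!: Sm_mult Sm_Lk assms)
  also have "\<dots> = (\<Sum>k\<in>UNIV. Lk i k y x * pd l (Lk i k y) x + pd l (Lk i k y) x * Lk i k y x)"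
    by (intro sum.cong refl pd_mult Sm_Lk assms)
  also have "\<dots> = (\<Sum>k\<in>UNIV. if k = l then 2 * Lk i k y x else 0)"
    by (intro sum.cong refl) (simp add: pd_Lk)
  also have "\<dots> = 2 * Lk i l y x" by simp
  finally show ?thesis .
qed

lemma Sm_Lpow: "Sm (\<lambda>y x. c * Lk i i y x ^ m)"
  by (intro Sm_mult Sm_const Sm_power Sm_Lk)

lemma pd_Lpow: assumes "inR y x"
  shows "pd a (\<lambda>x. c * Lk i i y x ^ m) x = (if a = i then c * of_nat m * Lk i i y x ^ (m - 1) else 0)"
proof -
  have pw: "pd a (\<lambda>x. Lk i i y x ^ m) x = (if a = i then of_nat m * Lk i i y x ^ (m - 1) else 0)" for m
  proof (induction m)
    case 0 then show ?case using pd_const[of a 1 x] by simp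
  next
    case (Suc m)
    have "pd a (\<lambda>x. Lk i i y x ^ Suc m) x = pd a (\<lambda>x. Lk i i y x * Lk i i y x ^ m) x" by simp
    also have "\<dots> = Lk i i y x * pd a (\<lambda>x. Lk i i y x ^ m) x + pd a (Lk i i y) x * Lk i i y x ^ m"
      by (rule pd_mult[OF Sm_Lk Sm_power[OF Sm_Lk] assms])
    also have "\<dots> = (if a = i then of_nat (Suc m) * Lk i i y x ^ (Suc m - 1) else 0)"
      using Suc by (cases m) (auto simp: pd_Lk algebra_simps)
    finally show ?case .
  qed
  have "pd a (\<lambda>x. c * Lk i i y x ^ m) x = c * pd a (\<lambda>x. Lk i i y x ^ m) x"
    by (rule pd_cmult[OF Sm_power[OF Sm_Lk] assms])
  then show ?thesis using pw by simp
qed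

lemma Dl_Lpow: assumes "inR y x"
  shows "Dl s (\<lambda>y x. c * Lk i i y x ^ m) y x =
    (if set s \<subseteq> {i} then c * (\<Prod>j<length s. of_nat (m - j)) * Lk i i y x ^ (m - length s) else 0)"
  using assms
proof (induction s arbitrary: c m)
  case Nil then show ?case by simp
next
  case (Cons a s)
  have "Dl (a#s) (\<lambda>y x. c * Lk i i y x ^ m) y x =
      Dl s (\<lambda>y x. if a = i then (c * of_nat m) * Lk i i y x ^ (m - 1) else 0) y x"
    by (simp only: Dl.simps) (rule Dl_cong[OF pd_Lpow Cons.prems], simp)
  also have "\<dots> = (if set (a#s) \<subseteq> {i} then c * (\<Prod>j<length (a#s). of_nat (m - j)) * Lk i i y x ^ (m - length (a#s)) else 0)"
  proof (cases "a = i")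
    case True
    have "Dl s (\<lambda>y x. (c * of_nat m) * Lk i i y x ^ (m - 1)) y x =
       (if set s \<subseteq> {i} then (c * of_nat m) * (\<Prod>j<length s. of_nat (m - 1 - j)) * Lk i i y x ^ (m - 1 - length s) else 0)"
      by (rule Cons.IH[OF Cons.prems])
    moreover have "(\<Prod>j<length (a#s). (of_nat (m - j) :: complex)) = of_nat m * (\<Prod>j<length s. of_nat (m - 1 - j))"
      unfolding length_Cons prod.lessThan_Suc_shift by (simp add: diff_diff_left del: prod.lessThan_Suc)
    ultimately show ?thesis using True by (simp add: mult_ac)
  next
    case False
    then show ?thesis by (simp add: Dl_zero)
  qed
  finally show ?case .
qed


lemma pd_diff:
  assumes "Sm f" "Sm g" "inR y x"
  shows "pd k (\<lambda>x. f y x - g y x) x = pd k (f y) x - pd k (g y) x"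
  by (intro pd_vd has_vector_derivative_diff Sm_hasderiv assms)

lemma hv_coord: "((\<lambda>t. complex_of_real ((x + t *\<^sub>R axis a 1) $ k)) has_vector_derivative
     (if k = a then 1 else 0)) (at 0)"
  by (auto intro!: derivative_eq_intros simp: axis_def)

lemma sum_if_outer:
  fixes a :: "'m::finite" and F :: "'n::finite \<Rightarrow> complex"
  shows "(\<Sum>k\<in>UNIV. \<Sum>l\<in>UNIV. (if k = a then F l else 0) * (c l :: complex)) = (\<Sum>l\<in>UNIV. F l * c l)"
proof -
  have "\<And>k. (\<Sum>l\<in>UNIV. (if k = a then F l else 0) * c l) = (if k = a then (\<Sum>l\<in>UNIV. F l * c l) else 0)"
    by auto
  then show ?thesis by simp
qed

lemma pd_taylor2:
  "pd a (taylor2 g) x = pd a g 0 + (1/2) * ((\<Sum>l\<in>UNIV. pd a (pd l g) 0 * complex_of_real (x$l))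
        + (\<Sum>k\<in>UNIV. pd k (pd a g) 0 * complex_of_real (x$k)))"
proof (rule pd_vd)
  let ?c = "\<lambda>k. complex_of_real ((x + 0 *\<^sub>R axis a 1) $ k)"
  have "((\<lambda>t. taylor2 g (x + t *\<^sub>R axis a 1)) has_vector_derivative
     (0 + (\<Sum>k\<in>UNIV. pd k g 0 * (if k = a then 1 else 0))
      + (1/2) * (\<Sum>k\<in>UNIV. \<Sum>l\<in>UNIV. pd k (pd l g) 0 * ?c k * (if l = a then 1 else 0)
             + pd k (pd l g) 0 * (if k = a then 1 else 0) * ?c l))) (at 0)"
    unfolding taylor2_def
    by (intro has_vector_derivative_add has_vector_derivative_const has_vector_derivative_sum
        has_vector_derivative_mult_right has_vector_derivative_mult hv_coord)
  moreover have "0 + (\<Sum>k\<in>UNIV. pd k g 0 * (if k = a then 1 else 0))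
      + (1/2) * (\<Sum>k\<in>UNIV. \<Sum>l\<in>UNIV. pd k (pd l g) 0 * ?c k * (if l = a then 1 else 0)
             + pd k (pd l g) 0 * (if k = a then 1 else 0) * ?c l)
     = pd a g 0 + (1/2) * ((\<Sum>l\<in>UNIV. pd a (pd l g) 0 * complex_of_real (x$l))
        + (\<Sum>k\<in>UNIV. pd k (pd a g) 0 * complex_of_real (x$k)))"
    by (simp add: sum.distrib if_distrib[of "\<lambda>z. _ * z"] cong: if_cong)
       (simp add: sum_if_outer)
  ultimately show "((\<lambda>t. taylor2 g (x + t *\<^sub>R axis a 1)) has_vector_derivative
     pd a g 0 + (1/2) * ((\<Sum>l\<in>UNIV. pd a (pd l g) 0 * complex_of_real (x$l))
        + (\<Sum>k\<in>UNIV. pd k (pd a g) 0 * complex_of_real (x$k)))) (at 0)" by simp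
qed

lemma pd_lin:
  "pd b (\<lambda>x. c0 + d * ((\<Sum>l\<in>UNIV. u l * complex_of_real (x$l)) + (\<Sum>k\<in>UNIV. v k * complex_of_real (x$k)))) x
    = d * (u b + v b)"
proof (rule pd_vd)
  have "((\<lambda>t. c0 + d * ((\<Sum>l\<in>UNIV. u l * complex_of_real ((x + t *\<^sub>R axis b 1)$l))
      + (\<Sum>k\<in>UNIV. v k * complex_of_real ((x + t *\<^sub>R axis b 1)$k)))) has_vector_derivative
     (0 + d * ((\<Sum>l\<in>UNIV. u l * (if l = b then 1 else 0)) + (\<Sum>k\<in>UNIV. v k * (if k = b then 1 else 0))))) (at 0)"
    by (intro has_vector_derivative_add has_vector_derivative_const has_vector_derivative_sum
        has_vector_derivative_mult_right hv_coord)
  then show "((\<lambda>t. c0 + d * ((\<Sum>l\<in>UNIV. u l * complex_of_real ((x + t *\<^sub>R axis b 1)$l))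
      + (\<Sum>k\<in>UNIV. v k * complex_of_real ((x + t *\<^sub>R axis b 1)$k)))) has_vector_derivative
     d * (u b + v b)) (at 0)" by (simp add: if_distrib[of "\<lambda>z. _ * z"] cong: if_cong)
qed

lemma Sm_taylor2:
  fixes f :: "real \<Rightarrow> real^'m::finite \<Rightarrow> complex"
  assumes "Sm f" shows "Sm (\<lambda>y x. taylor2 (f y) x)"
proof -
  have c0: "continuous_on {-1/4<..<1/4} (\<lambda>y. f y 0)" by (rule Sm_cont[OF assms]) simp
  have c1: "continuous_on {-1/4<..<1/4} (\<lambda>y. pd k (f y) 0)" for k
    by (rule Sm_cont[OF Sm_pd[OF assms]]) simp
  have c2: "continuous_on {-1/4<..<1/4} (\<lambda>y. pd k (pd l (f y)) 0)" for k l
    by (rule Sm_cont[OF Sm_pd[OF Sm_pd[OF assms]]]) simp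
  have s0: "Sm (\<lambda>y x. f y 0)" by (rule Sm_coef[OF c0])
  have s1: "Sm (\<lambda>y x. \<Sum>k\<in>UNIV. pd k (f y) 0 * complex_of_real (x$k))"
    by (intro Sm_sum Sm_mult Sm_coef[OF c1] Sm_coord) auto
  have s2: "Sm (\<lambda>y x. (1/2) * (\<Sum>k\<in>UNIV. \<Sum>l\<in>UNIV. pd k (pd l (f y)) 0 * complex_of_real (x$k) * complex_of_real (x$l)))"
    by (intro Sm_sum Sm_mult Sm_coef[OF c2] Sm_coord Sm_const) auto
  show ?thesis unfolding taylor2_def by (intro Sm_add s0 s1 s2)
qed

lemma taylor2_0: "taylor2 g 0 = g 0" by (simp add: taylor2_def)

lemma ord_taylor:
  fixes f :: "real \<Rightarrow> real^'m::finite \<Rightarrow> complex"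
  assumes Sf: "Sm f" and sym: "\<And>y k l. \<bar>y\<bar> < 1/4 \<Longrightarrow> pd k (pd l (f y)) 0 = pd l (pd k (f y)) 0"
  shows "ord (\<lambda>y x. f y x - taylor2 (f y) x) 3"
proof -
  let ?F = "\<lambda>y x. f y x - taylor2 (f y) x"
  have ST: "Sm (\<lambda>y x. taylor2 (f y) x)" by (rule Sm_taylor2[OF Sf])
  have SF: "Sm ?F" by (rule Sm_diff[OF Sf ST])
  have "(\<lambda>y. Dl s ?F y 0) \<in> O[at_right 0](\<lambda>y. complex_of_real y ^ (3 - length s))" for s :: "'m list"
  proof (cases "length s \<ge> 3")
    case True
    have "(\<lambda>y. Dl s ?F y 0) \<in> O[at_right 0](\<lambda>y. complex_of_real y ^ (0 - length s))"
      using Sm_ord0[OF SF] unfolding ord_def by blast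
    then show ?thesis using True by simp
  next
    case False
    have ev: "eventually (\<lambda>y. Dl s ?F y 0 = 0) (at_right 0)"
      using ev_inR0
    proof (rule eventually_mono)
      fix y assume y: "inR y (0::real^'m)"
      have yb: "\<bar>y\<bar> < 1/4" using y by (simp add: inR_def)
      consider "s = []" | a where "s = [a]" | a b where "s = [a, b]"
        using False by (cases s; cases "tl s"; cases "tl (tl s)") auto
      then show "Dl s ?F y 0 = 0"
      proof cases
        case 1 then show ?thesis by (simp add: taylor2_0)
      next
        case (2 a)
        have "Dl s ?F y 0 = pd a (\<lambda>x. f y x - taylor2 (f y) x) 0" using 2 by simp
        also have "\<dots> = pd a (f y) 0 - pd a (taylor2 (f y)) 0" by (rule pd_diff[OF Sf ST y])
        also have "\<dots> = 0" by (simp add: pd_taylor2)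
        finally show ?thesis .
      next
        case (3 a b)
        have "Dl s ?F y 0 = pd b (pd a (\<lambda>x. f y x - taylor2 (f y) x)) 0" using 3 by simp
        also have "\<dots> = pd b (\<lambda>x. pd a (f y) x - pd a (taylor2 (f y)) x) 0"
          by (rule pd_cong) (use pd_diff[OF Sf ST] yb in \<open>auto simp: inR_def\<close>)
        also have "\<dots> = pd b (pd a (f y)) 0 - pd b (pd a (taylor2 (f y))) 0"
          by (rule pd_diff[OF Sm_pd[OF Sf] Sm_pd[OF ST] y])
        also have "pd a (taylor2 (f y)) = (\<lambda>x. pd a (f y) 0 + (1/2) * ((\<Sum>l\<in>UNIV. pd a (pd l (f y)) 0 * complex_of_real (x$l))
        + (\<Sum>k\<in>UNIV. pd k (pd a (f y)) 0 * complex_of_real (x$k))))"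
          by (rule ext) (rule pd_taylor2)
        also have "pd b (\<lambda>x. pd a (f y) 0 + (1/2) * ((\<Sum>l\<in>UNIV. pd a (pd l (f y)) 0 * complex_of_real (x$l))
        + (\<Sum>k\<in>UNIV. pd k (pd a (f y)) 0 * complex_of_real (x$k)))) 0
          = (1/2) * (pd a (pd b (f y)) 0 + pd b (pd a (f y)) 0)"
          by (rule pd_lin)
        also have "pd b (pd a (f y)) 0 - (1/2) * (pd a (pd b (f y)) 0 + pd b (pd a (f y)) 0) = 0"
          using sym[OF yb, of a b] by simp
        finally show ?thesis .
      qed
    qed
    have "(\<lambda>y. Dl s ?F y 0) \<in> O[at_right 0](\<lambda>y. complex_of_real y ^ (3 - length s)) \<longleftrightarrow>
          (\<lambda>y. 0) \<in> O[at_right 0](\<lambda>y. complex_of_real y ^ (3 - length s))"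
      by (rule landau_o.big.in_cong[OF ev])
    then show ?thesis by simp
  qed
  then show ?thesis using SF unfolding ord_def by blast
qed


lemma holo_Oy:
  assumes "F holomorphic_on ball 0 1"
  shows "(\<lambda>y. F (- ((complex_of_real y)^2)) - F 0) \<in> O[at_right 0](\<lambda>y. complex_of_real y)"
proof -
  have "(F has_field_derivative deriv F 0) (at 0)"
    by (rule holomorphic_derivI[OF assms open_ball]) simp
  then have "((\<lambda>z. (F z - F 0) / (z - 0)) \<longlongrightarrow> deriv F 0) (at 0)"
    by (simp only: has_field_derivative_iff)
  then have 1: "(\<lambda>z. F z - F 0) \<in> O[at 0](\<lambda>z. z)"
    by (intro bigoI_tendsto[where c = "deriv F 0"]) (auto simp: eventually_at_filter)
  have lim: "filterlim (\<lambda>y. - ((complex_of_real y)^2)) (at 0) (at_right 0)"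
    unfolding filterlim_at
  proof
    show "eventually (\<lambda>y. - ((complex_of_real y)^2) \<in> UNIV \<and> - ((complex_of_real y)^2) \<noteq> 0) (at_right 0)"
      using eventually_at_right_less[of "0::real"] by (rule eventually_mono) auto
    have "((\<lambda>y. - ((complex_of_real y)^2)) \<longlongrightarrow> - ((complex_of_real 0)^2)) (at_right 0)"
      by (intro tendsto_intros)
    then show "((\<lambda>y. - ((complex_of_real y)^2)) \<longlongrightarrow> 0) (at_right 0)" by simp
  qed
  have 2: "(\<lambda>y. F (- ((complex_of_real y)^2)) - F 0) \<in> O[at_right 0](\<lambda>y. - ((complex_of_real y)^2))"
    using landau_o.big.compose[OF 1 lim] by simp
  have 3: "(\<lambda>y. - ((complex_of_real y)^2)) \<in> O[at_right 0](\<lambda>y. complex_of_real y)"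
    using pow_mono[of 1 2] by simp
  show ?thesis by (rule landau_o.big.trans[OF 2 3])
qed

definition B1 :: "complex \<Rightarrow> complex" where "B1 = deriv GB"
definition B2 :: "complex \<Rightarrow> complex" where "B2 = deriv B1"

lemma B1_holo: "B1 holomorphic_on ball 0 1"
  unfolding B1_def by (rule holomorphic_deriv[OF GB_holo open_ball])
lemma B2_holo: "B2 holomorphic_on ball 0 1"
  unfolding B2_def by (rule holomorphic_deriv[OF B1_holo open_ball])

definition fP :: "'m::finite \<Rightarrow> real \<Rightarrow> real^'m \<Rightarrow> complex" where
  "fP i y x = complex_of_real (theta y) * complex_of_real (x$i) + \<i> * (GB (qf i y x) - GB (qf i y 0))"

lemma cont_theta: "continuous_on {-1/4<..<1/4} (\<lambda>y. complex_of_real (theta y))"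
proof -
  have "continuous_on {-1/4<..<1/4} theta"
    by (intro continuous_at_imp_continuous_on ballI theta_cont) (use pi_gt3 in auto)
  then show ?thesis by simp
qed

lemma inR0: "inR y x \<Longrightarrow> inR y 0" by (simp add: inR_def)

lemma Sm_qf0: "Sm (\<lambda>y x. qf i y 0)"
  unfolding qf_0 by (intro Sm_coef continuous_intros)

lemma Sm_GBqf: "Sm (\<lambda>y x. GB (qf i y x))"
  by (rule Sm_comp[OF Sm_qf qf_ball GB_holo])
lemma Sm_GBqf0: "Sm (\<lambda>y x. GB (qf i y 0))"
  by (rule Sm_comp[OF Sm_qf0 qf_ball[OF inR0] GB_holo])

lemma Sm_fP: "Sm (fP i)"
  unfolding fP_def[abs_def]
  by (intro Sm_add Sm_mult Sm_coef[OF cont_theta] Sm_coord Sm_const Sm_diff Sm_GBqf Sm_GBqf0)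

definition El :: "'m::finite \<Rightarrow> 'm \<Rightarrow> real \<Rightarrow> real^'m \<Rightarrow> complex" where
  "El i l y x = complex_of_real (theta y) * (if i = l then 1 else 0) + \<i> * (B1 (qf i y x) * (2 * Lk i l y x))"

lemma pd_fP: assumes "inR y x" shows "pd l (fP i y) x = El i l y x"
proof -
  have st: "Sm (\<lambda>y x. complex_of_real (theta y) * complex_of_real (x$i))"
    by (intro Sm_mult Sm_coef[OF cont_theta] Sm_coord)
  have sg: "Sm (\<lambda>y x. \<i> * (GB (qf i y x) - GB (qf i y 0)))"
    by (intro Sm_mult Sm_const Sm_diff Sm_GBqf Sm_GBqf0)
  have "pd l (fP i y) x = pd l (\<lambda>x. complex_of_real (theta y) * complex_of_real (x$i) + \<i> * (GB (qf i y x) - GB (qf i y 0))) x"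
    by (simp add: fP_def[abs_def])
  also have "\<dots> = pd l (\<lambda>x. complex_of_real (theta y) * complex_of_real (x$i)) x
      + pd l (\<lambda>x. \<i> * (GB (qf i y x) - GB (qf i y 0))) x"
    by (rule pd_add[OF st sg assms])
  also have "pd l (\<lambda>x. complex_of_real (theta y) * complex_of_real (x$i)) x
      = complex_of_real (theta y) * pd l (\<lambda>x. complex_of_real (x$i)) x"
    by (rule pd_cmult[OF Sm_coord assms])
  also have "pd l (\<lambda>x. \<i> * (GB (qf i y x) - GB (qf i y 0))) x
      = \<i> * pd l (\<lambda>x. GB (qf i y x) - GB (qf i y 0)) x"
    by (rule pd_cmult[OF Sm_diff[OF Sm_GBqf Sm_GBqf0] assms])
  also have "pd l (\<lambda>x. GB (qf i y x) - GB (qf i y 0)) x = pd l (\<lambda>x. GB (qf i y x)) x - pd l (\<lambda>x. GB (qf i y 0)) x"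
    by (rule pd_diff[OF Sm_GBqf Sm_GBqf0 assms])
  also have "pd l (\<lambda>x. GB (qf i y x)) x = deriv GB (qf i y x) * pd l (qf i y) x"
    by (rule pd_comp[OF Sm_qf qf_ball GB_holo assms])
  also have "pd l (\<lambda>x. GB (qf i y 0)) x = 0" by (rule pd_const)
  finally show ?thesis using pd_qf[OF assms] by (simp add: El_def pd_coord B1_def)
qed

lemma Sm_El: "Sm (El i l)"
  unfolding El_def[abs_def]
  by (intro Sm_add Sm_mult Sm_coef[OF cont_theta] Sm_const Sm_Lk Sm_comp[OF Sm_qf qf_ball B1_holo])

lemma pd_El: assumes "inR y x"
  shows "pd k (El i l y) x = \<i> * (B2 (qf i y x) * (2 * Lk i k y x) * (2 * Lk i l y x)
          + B1 (qf i y x) * (2 * (if l = k then 1 else 0)))"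
proof -
  have s1: "Sm (\<lambda>y x. complex_of_real (theta y) * (if i = l then 1 else 0))"
    by (intro Sm_mult Sm_coef[OF cont_theta] Sm_const)
  have sB: "Sm (\<lambda>y x. B1 (qf i y x))" by (rule Sm_comp[OF Sm_qf qf_ball B1_holo])
  have sL: "Sm (\<lambda>y x. 2 * Lk i l y x)" by (intro Sm_mult Sm_const Sm_Lk)
  have s2: "Sm (\<lambda>y x. \<i> * (B1 (qf i y x) * (2 * Lk i l y x)))" by (intro Sm_mult Sm_const sB sL)
  have "pd k (El i l y) x = pd k (\<lambda>x. complex_of_real (theta y) * (if i = l then 1 else 0)
        + \<i> * (B1 (qf i y x) * (2 * Lk i l y x))) x"
    by (simp add: El_def[abs_def])
  also have "\<dots> = pd k (\<lambda>x. complex_of_real (theta y) * (if i = l then 1 else 0)) x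
      + pd k (\<lambda>x. \<i> * (B1 (qf i y x) * (2 * Lk i l y x))) x"
    by (rule pd_add[OF s1 s2 assms])
  also have "pd k (\<lambda>x. complex_of_real (theta y) * (if i = l then 1 else 0)) x = 0" by (rule pd_const)
  also have "pd k (\<lambda>x. \<i> * (B1 (qf i y x) * (2 * Lk i l y x))) x = \<i> * pd k (\<lambda>x. B1 (qf i y x) * (2 * Lk i l y x)) x"
    by (rule pd_cmult[OF Sm_mult[OF sB sL] assms])
  also have "pd k (\<lambda>x. B1 (qf i y x) * (2 * Lk i l y x)) x
     = B1 (qf i y x) * pd k (\<lambda>x. 2 * Lk i l y x) x + pd k (\<lambda>x. B1 (qf i y x)) x * (2 * Lk i l y x)"
    by (rule pd_mult[OF sB sL assms])
  also have "pd k (\<lambda>x. 2 * Lk i l y x) x = 2 * pd k (Lk i l y) x" by (rule pd_cmult[OF Sm_Lk assms])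
  also have "pd k (\<lambda>x. B1 (qf i y x)) x = deriv B1 (qf i y x) * pd k (qf i y) x"
    by (rule pd_comp[OF Sm_qf qf_ball B1_holo assms])
  finally show ?thesis using pd_qf[OF assms] by (simp add: pd_Lk B2_def algebra_simps)
qed

definition hq :: "'m::finite \<Rightarrow> real \<Rightarrow> 'm \<Rightarrow> 'm \<Rightarrow> complex" where
  "hq i y k l = \<i> * (B2 (- ((complex_of_real y)^2)) * (2 * cf i k y) * (2 * cf i l y)
          + B1 (- ((complex_of_real y)^2)) * (2 * (if l = k then 1 else 0)))"

lemma hess_fP: assumes "\<bar>y\<bar> < 1/4"
  shows "pd k (pd l (fP i y)) 0 = hq i y k l"
proof -
  have y0: "inR y 0" using assms by (simp add: inR_def)
  have "pd k (pd l (fP i y)) 0 = pd k (El i l y) 0"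
    by (rule pd_cong) (use pd_fP assms in \<open>auto simp: inR_def\<close>)
  also have "\<dots> = \<i> * (B2 (qf i y 0) * (2 * Lk i k y 0) * (2 * Lk i l y 0)
          + B1 (qf i y 0) * (2 * (if l = k then 1 else 0)))" by (rule pd_El[OF y0])
  also have "\<dots> = hq i y k l" by (simp only: hq_def qf_0) (simp add: Lk_def)
  finally show ?thesis .
qed

lemma hq_sym: "hq i y k l = hq i y l k"
  by (simp add: hq_def mult_ac)

lemma hq_offdiag: "k \<noteq> l \<Longrightarrow> hq i y k l = 0"
  by (auto simp: hq_def cf_def)

lemma ord_fPT: "ord (\<lambda>y x. fP i y x - taylor2 (fP i y) x) 3"
  by (rule ord_taylor[OF Sm_fP]) (simp add: hess_fP hq_sym)

lemma psi_eq: assumes "theta (yom w) = w"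
  shows "psi w i = fP i (yom w)"
proof
  fix x
  have e1: "cvec x + axis i (\<i> * complex_of_real (yom w)) = lft i (yom w) x" by (simp add: lft_def)
  have e2: "axis i (\<i> * complex_of_real (yom w)) = lft i (yom w) 0" by (simp add: lft_def cvec_def zero_vec_def)
  have "psi w i x = complex_of_real w * cbil (lft i (yom w) x) (axis i 1) + \<i> * GB (csq (lft i (yom w) x))
      - (complex_of_real w * cbil (lft i (yom w) 0) (axis i 1) + \<i> * GB (csq (lft i (yom w) 0)))"
    unfolding psi_def phi_def evenapp_def e1 unfolding e2 GB_def ..
  also have "\<dots> = complex_of_real w * Lk i i (yom w) x + \<i> * GB (qf i (yom w) x)
      - (complex_of_real w * Lk i i (yom w) 0 + \<i> * GB (qf i (yom w) 0))"
    by (simp only: cbil_lft csq_lft)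
  also have "\<dots> = fP i (yom w) x"
    using assms by (simp add: fP_def Lk_i algebra_simps)
  finally show "psi w i x = fP i (yom w) x" .
qed

definition ph :: "nat \<Rightarrow> nat \<Rightarrow> nat \<Rightarrow> 'm::finite \<Rightarrow> real \<Rightarrow> real^'m \<Rightarrow> complex" where
  "ph n k1 k2 i y x = (-1)^k1 * \<i>^k2 * GA n k1 (qf i y x)"

definition gA :: "nat \<Rightarrow> nat \<Rightarrow> nat \<Rightarrow> 'm::finite \<Rightarrow> real \<Rightarrow> real^'m \<Rightarrow> complex" where
  "gA n k1 k2 i y x = ph n k1 k2 i y x * Lk i i y x ^ k2"

lemma a_om_eq: "a_om n k1 k2 i w = gA n k1 k2 i (yom w)"
proof
  fix x
  show "a_om n k1 k2 i w x = gA n k1 k2 i (yom w) x"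
    by (simp add: a_om_def a_fun_def evenapp_def gA_def ph_def GA_def[symmetric] lft_def[symmetric]
          csq_lft cbil_lft mult_ac)
qed

lemma Sm_ph: "Sm (ph n k1 k2 i)"
  unfolding ph_def[abs_def] by (intro Sm_mult Sm_const Sm_comp[OF Sm_qf qf_ball GA_holo])

lemma Sm_gA: "Sm (gA n k1 k2 i)"
  unfolding gA_def[abs_def] by (intro Sm_mult Sm_ph Sm_power Sm_Lk)

lemma ord_L: "ord (\<lambda>y x. Lk i i y x ^ m) m"
proof -
  have "(\<lambda>y. Dl s (\<lambda>y x. Lk i i y x ^ m) y 0) \<in> O[at_right 0](\<lambda>y. complex_of_real y ^ (m - length s))" for s
  proof -
    define P where "P = (if set s \<subseteq> {i} then (\<Prod>j<length s. of_nat (m - j)) else (0::complex))"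
    have ev: "eventually (\<lambda>y. Dl s (\<lambda>y x. Lk i i y x ^ m) y 0 = P * \<i>^(m - length s) * complex_of_real y ^ (m - length s)) (at_right 0)"
      using ev_inR0
    proof (rule eventually_mono)
      fix y assume y: "inR y (0::real^'a)"
      have "Dl s (\<lambda>y x. Lk i i y x ^ m) y 0 = Dl s (\<lambda>y x. 1 * Lk i i y x ^ m) y 0" by simp
      also have "\<dots> = P * Lk i i y 0 ^ (m - length s)" using Dl_Lpow[OF y, of s 1 i m] by (simp add: P_def)
      finally show "Dl s (\<lambda>y x. Lk i i y x ^ m) y 0 = P * \<i>^(m - length s) * complex_of_real y ^ (m - length s)"
        by (simp add: Lk_i power_mult_distrib)
    qed
    have "(\<lambda>y. P * \<i>^(m - length s) * complex_of_real y ^ (m - length s)) \<in> O[at_right 0](\<lambda>y. complex_of_real y ^ (m - length s))"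
      by simp
    then show ?thesis using landau_o.big.in_cong[OF ev] by simp
  qed
  then show ?thesis unfolding ord_def by (auto intro: Sm_power Sm_Lk)
qed

lemma ord_gA: "ord (gA n k1 k2 i) k2"
proof -
  have "ord (\<lambda>y x. ph n k1 k2 i y x * Lk i i y x ^ k2) (0 + k2)"
    by (intro ord_mult Sm_ord0 Sm_ph ord_L)
  then show ?thesis by (simp add: gA_def[abs_def])
qed

lemma ord_ph_diff: "ord (\<lambda>y x. ph n k1 k2 i y x - ph n k1 k2 i y 0) 1"
proof -
  have S: "Sm (\<lambda>y x. ph n k1 k2 i y x - ph n k1 k2 i y 0)"
    by (intro Sm_diff Sm_ph Sm_coef Sm_cont[OF Sm_ph]) simp
  have "(\<lambda>y. Dl s (\<lambda>y x. ph n k1 k2 i y x - ph n k1 k2 i y 0) y 0) \<in> O[at_right 0](\<lambda>y. complex_of_real y ^ (1 - length s))"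
    for s :: "'a list"
  proof (cases s)
    case Nil then show ?thesis by simp
  next
    case (Cons a t)
    have ev: "eventually (\<lambda>y. Dl s (\<lambda>y x. ph n k1 k2 i y x - ph n k1 k2 i y 0) y 0 = Dl s (ph n k1 k2 i) y 0) (at_right 0)"
      using ev_inR0
    proof (rule eventually_mono)
      fix y assume y: "inR y (0::real^'a)"
      have "Dl s (\<lambda>y x. ph n k1 k2 i y x + (-1) * ph n k1 k2 i y 0) y 0 = Dl s (ph n k1 k2 i) y 0 + Dl s (\<lambda>y x. (-1) * ph n k1 k2 i y 0) y 0"
        by (rule Dl_add[OF Sm_ph _ y]) (intro Sm_mult Sm_const Sm_coef Sm_cont[OF Sm_ph], simp)
      also have "Dl s (\<lambda>y x. (-1) * ph n k1 k2 i y 0) y 0 = 0" using Cons Dl_coef[of a t "\<lambda>y. (-1) * ph n k1 k2 i y 0"] by simp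
      finally show "Dl s (\<lambda>y x. ph n k1 k2 i y x - ph n k1 k2 i y 0) y 0 = Dl s (ph n k1 k2 i) y 0" by simp
    qed
    have "(\<lambda>y. Dl s (ph n k1 k2 i) y 0) \<in> O[at_right 0](\<lambda>y. complex_of_real y ^ (0 - length s))"
      using Sm_ord0[OF Sm_ph] unfolding ord_def by blast
    then show ?thesis using landau_o.big.in_cong[OF ev] Cons by simp
  qed
  then show ?thesis using S unfolding ord_def by blast
qed


lemma matrix_inv_diag:
  fixes d :: "'m::finite \<Rightarrow> complex"
  assumes "\<And>k. d k \<noteq> 0"
  shows "matrix_inv (\<chi> k l. if k = l then d k else 0) = (\<chi> k l. if k = l then inverse (d k) else 0)"
proof -
  define H where "H = (\<chi> k l. if k = l then d k else (0::complex))"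
  define N where "N = (\<chi> k l. if k = l then inverse (d k) else (0::complex))"
  have "(H ** N) $ a $ b = mat 1 $ a $ b" for a b
  proof -
    have "(H ** N) $ a $ b = (\<Sum>k\<in>UNIV. (if a = k then d a else 0) * N $ k $ b)"
      unfolding matrix_matrix_mult_def H_def by simp
    also have "\<dots> = (\<Sum>k\<in>UNIV. if a = k then d a * N $ k $ b else 0)"
      by (intro sum.cong) auto
    finally have "(H ** N) $ a $ b = d a * N $ a $ b" by simp
    then show ?thesis using assms by (simp add: N_def mat_def)
  qed
  then have HN: "H ** N = mat 1" by (simp add: vec_eq_iff)
  have "(N ** H) $ a $ b = mat 1 $ a $ b" for a b
  proof -
    have "(N ** H) $ a $ b = (\<Sum>k\<in>UNIV. (if a = k then inverse (d a) else 0) * H $ k $ b)"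
      unfolding matrix_matrix_mult_def N_def by simp
    also have "\<dots> = (\<Sum>k\<in>UNIV. if a = k then inverse (d a) * H $ k $ b else 0)"
      by (intro sum.cong) auto
    finally have "(N ** H) $ a $ b = inverse (d a) * H $ a $ b" by simp
    then show ?thesis using assms by (simp add: H_def mat_def)
  qed
  then have NH: "N ** H = mat 1" by (simp add: vec_eq_iff)
  have ex: "\<exists>A'. H ** A' = mat 1 \<and> A' ** H = mat 1" using HN NH by blast
  define Hi where "Hi = matrix_inv H"
  have "H ** Hi = mat 1 \<and> Hi ** H = mat 1"
    unfolding Hi_def matrix_inv_def by (rule someI_ex[OF ex])
  then have "Hi = Hi ** (H ** N)" "Hi ** H = mat 1" by (simp_all add: HN)
  then have "Hi = N" by (simp add: matrix_mul_assoc)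
  then show ?thesis by (simp add: Hi_def H_def N_def)
qed

definition hdg :: "'m::finite \<Rightarrow> real \<Rightarrow> 'm \<Rightarrow> complex" where "hdg i y k = hq i y k k"

lemma hess0_fP: assumes "\<bar>y\<bar> < 1/4"
  shows "hess0 (fP i y) = (\<chi> k l. if k = l then hdg i y k else 0)"
  using assms by (auto simp: hess0_def vec_eq_iff hess_fP hdg_def hq_offdiag)

lemma B1_0: "B1 0 = 1/3" by (simp add: B1_def GB_deriv0)

lemma cont_comp_negsq:
  assumes "F holomorphic_on ball 0 1"
  shows "continuous_on {-1/4<..<1/4} (\<lambda>y. F (- ((complex_of_real y)^2)))"
proof (rule continuous_on_compose2[of "ball 0 1" F])
  show "continuous_on (ball 0 1) F" using assms holomorphic_on_imp_continuous_on by blast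
  show "continuous_on {-1/4<..<1/4} (\<lambda>y. - ((complex_of_real y)^2))" by (intro continuous_intros)
  show "(\<lambda>y. - ((complex_of_real y)^2)) ` {-1/4<..<1/4} \<subseteq> ball 0 1"
  proof
    fix z assume "z \<in> (\<lambda>y. - ((complex_of_real y)^2)) ` {-1/4<..<1/4}"
    then obtain y where y0: "y \<in> {-1/4<..<1/4}" and y1: "z = - ((complex_of_real y)^2)" by blast
    have y: "\<bar>y\<bar> < 1/4" "z = - ((complex_of_real y)^2)" using y0 y1 by auto
    have "\<bar>y\<bar>^2 \<le> (1/4)^2" using y by (intro power_mono) auto
    then have "y * y < 1" by (simp add: power2_eq_square)
    then show "z \<in> ball 0 1" using y by (simp add: norm_mult power2_eq_square abs_mult_self_eq)
  qed
qed

lemma cf_sq_O: "(\<lambda>y. (2 * cf i k y) * (2 * cf i k y)) \<in> O[at_right 0](\<lambda>y. complex_of_real y)"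
proof (rule bigoI[of _ "4::real"])
  show "eventually (\<lambda>y. norm ((2 * cf i k y) * (2 * cf i k y)) \<le> 4 * norm (complex_of_real y)) (at_right 0)"
    using eventually_at_right_real[OF zero_less_one]
  proof (rule eventually_mono)
    fix y :: real assume y: "y \<in> {0<..<1}"
    then have "y * y \<le> y" by (simp add: mult_le_cancel_left1)
    then show "norm ((2 * cf i k y) * (2 * cf i k y)) \<le> 4 * norm (complex_of_real y)"
      using y by (auto simp: cf_def norm_mult)
  qed
qed

lemma hdg_asym: "(\<lambda>y. hdg i y k - 2 * \<i> / 3) \<in> O[at_right 0](\<lambda>y. complex_of_real y)"
proof -
  have b2: "(\<lambda>y. B2 (- ((complex_of_real y)^2))) \<in> O[at_right 0](\<lambda>y. 1)"
    by (rule cont_bigo1[OF cont_comp_negsq[OF B2_holo]])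
  have t1: "(\<lambda>y. B2 (- ((complex_of_real y)^2)) * ((2 * cf i k y) * (2 * cf i k y))) \<in> O[at_right 0](\<lambda>y. 1 * complex_of_real y)"
    by (rule landau_o.big_mult[OF b2 cf_sq_O])
  have t2: "(\<lambda>y. B1 (- ((complex_of_real y)^2)) - B1 0) \<in> O[at_right 0](\<lambda>y. complex_of_real y)"
    by (rule holo_Oy[OF B1_holo])
  have "(\<lambda>y. \<i> * (B2 (- ((complex_of_real y)^2)) * ((2 * cf i k y) * (2 * cf i k y))) + (2 * \<i>) * (B1 (- ((complex_of_real y)^2)) - B1 0))
        \<in> O[at_right 0](\<lambda>y. complex_of_real y)"
    using t1 t2 by (intro sum_in_bigo(1)) auto
  moreover have "\<i> * (B2 (- ((complex_of_real y)^2)) * ((2 * cf i k y) * (2 * cf i k y))) + (2 * \<i>) * (B1 (- ((complex_of_real y)^2)) - B1 0)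
      = hdg i y k - 2 * \<i> / 3" for y
    by (simp add: hdg_def hq_def B1_0 algebra_simps)
  ultimately show ?thesis by simp
qed

lemma inv_asym:
  fixes a :: "real \<Rightarrow> complex"
  assumes "(\<lambda>y. a y - A) \<in> O[at_right 0](\<lambda>y. complex_of_real y)" "A \<noteq> 0"
  shows "(\<lambda>y. inverse (a y) - inverse A) \<in> O[at_right 0](\<lambda>y. complex_of_real y)"
    and "eventually (\<lambda>y. a y \<noteq> 0) (at_right 0)"
proof -
  obtain c where c: "c > 0" "eventually (\<lambda>y. norm (a y - A) \<le> c * norm (complex_of_real y)) (at_right 0)"
    using assms(1) by (auto elim!: landau_o.bigE)
  define e where "e = min 1 (norm A / (2 * c))"
  have e: "e > 0" using c assms(2) by (simp add: e_def)
  have ev: "eventually (\<lambda>y. norm (a y - A) \<le> c * norm (complex_of_real y) \<and> y \<in> {0<..<e}) (at_right 0)"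
    using c(2) eventually_at_right_real[OF e] by (rule eventually_conj)
  have key: "norm (a y) \<ge> norm A / 2" if "norm (a y - A) \<le> c * norm (complex_of_real y)" "y \<in> {0<..<e}" for y
  proof -
    have "c * y \<le> c * (norm A / (2 * c))" using that(2) c(1) by (intro mult_left_mono) (auto simp: e_def)
    then have "norm (a y - A) \<le> norm A / 2" using that c(1) by simp
    moreover have "norm A \<le> norm (a y) + norm (a y - A)" using norm_triangle_ineq4[of "a y" "a y - A"] by simp
    ultimately show ?thesis by simp
  qed
  show "eventually (\<lambda>y. a y \<noteq> 0) (at_right 0)"
    using ev by (rule eventually_mono) (use key assms(2) in fastforce)
  show "(\<lambda>y. inverse (a y) - inverse A) \<in> O[at_right 0](\<lambda>y. complex_of_real y)"
  proof (rule bigoI[of _ "2 * c / (norm A)^2"])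
    show "eventually (\<lambda>y. norm (inverse (a y) - inverse A) \<le> 2 * c / (norm A)^2 * norm (complex_of_real y)) (at_right 0)"
      using ev
    proof (rule eventually_mono)
      fix y assume h: "norm (a y - A) \<le> c * norm (complex_of_real y) \<and> y \<in> {0<..<e}"
      have ka: "norm (a y) \<ge> norm A / 2" using key h by blast
      have a0: "a y \<noteq> 0" using ka assms(2) by auto
      have "inverse (a y) - inverse A = (A - a y) / (a y * A)" using a0 assms(2) by (simp add: field_simps)
      then have "norm (inverse (a y) - inverse A) = norm (a y - A) / (norm (a y) * norm A)"
        by (simp add: norm_divide norm_mult norm_minus_commute)
      also have "\<dots> \<le> (c * norm (complex_of_real y)) / ((norm A / 2) * norm A)"
        using h ka assms(2) c(1) by (intro frac_le mult_mono) auto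
      also have "\<dots> = 2 * c / (norm A)^2 * norm (complex_of_real y)"
        using assms(2) by (simp add: field_simps power2_eq_square)
      finally show "norm (inverse (a y) - inverse A) \<le> 2 * c / (norm A)^2 * norm (complex_of_real y)" .
    qed
  qed
qed

lemma O_y_bounded: "(\<lambda>y. complex_of_real y) \<in> O[at_right 0](\<lambda>y. 1)"
  using pow_mono[of 0 1] by simp

lemma diff_bounded:
  assumes "(\<lambda>y. a y - A) \<in> O[at_right 0](\<lambda>y. complex_of_real y)"
  shows "a \<in> O[at_right 0](\<lambda>y. 1)"
proof -
  have "(\<lambda>y. (a y - A) + A) \<in> O[at_right 0](\<lambda>y. 1)"
    by (intro sum_in_bigo(1) landau_o.big.trans[OF assms O_y_bounded]) simp
  then show ?thesis by simp
qed

lemma mult_asym: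
  assumes "(\<lambda>y. a y - A) \<in> O[at_right 0](\<lambda>y. complex_of_real y)"
      and "(\<lambda>y. b y - B) \<in> O[at_right 0](\<lambda>y. complex_of_real y)"
  shows "(\<lambda>y. a y * b y - A * B) \<in> O[at_right 0](\<lambda>y. complex_of_real y)"
proof -
  have 1: "(\<lambda>y. a y * (b y - B)) \<in> O[at_right 0](\<lambda>y. 1 * complex_of_real y)"
    by (rule landau_o.big_mult[OF diff_bounded[OF assms(1)] assms(2)])
  have 2: "(\<lambda>y. B * (a y - A)) \<in> O[at_right 0](\<lambda>y. complex_of_real y)"
    using assms(1) by (cases "B = 0") auto
  have "(\<lambda>y. a y * (b y - B) + B * (a y - A)) \<in> O[at_right 0](\<lambda>y. complex_of_real y)"
    using 1 2 by (intro sum_in_bigo(1)) auto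
  moreover have "a y * (b y - B) + B * (a y - A) = a y * b y - A * B" for y by (simp add: algebra_simps)
  ultimately show ?thesis by simp
qed

lemma pow_asym:
  assumes "(\<lambda>y. a y - A) \<in> O[at_right 0](\<lambda>y. complex_of_real y)"
  shows "(\<lambda>y. a y ^ m - A ^ m) \<in> O[at_right 0](\<lambda>y. complex_of_real y)"
proof (induction m)
  case 0 then show ?case by simp
next
  case (Suc m)
  from mult_asym[OF assms Suc] show ?case by simp
qed

definition Mx :: "'m::finite \<Rightarrow> real \<Rightarrow> complex^'m^'m" where
  "Mx i y = (\<chi> k l. if k = l then inverse (hdg i y k) else 0)"

lemma hdg_ev: "eventually (\<lambda>y. \<forall>k. hdg i y k \<noteq> 0) (at_right 0)"
  by (intro eventually_all_finite inv_asym(2)[OF hdg_asym]) simp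

lemma M_ev: "eventually (\<lambda>y. matrix_inv (hess0 (fP i y)) = Mx i y) (at_right 0)"
  using eventually_conj[OF hdg_ev[of i] ev_inR0]
proof (rule eventually_mono)
  fix y assume h: "(\<forall>k. hdg i y k \<noteq> 0) \<and> inR y (0::real^'a)"
  then have "\<bar>y\<bar> < 1/4" by (simp add: inR_def)
  then have "hess0 (fP i y) = (\<chi> k l. if k = l then hdg i y k else 0)" by (rule hess0_fP)
  then show "matrix_inv (hess0 (fP i y)) = Mx i y"
    using matrix_inv_diag[of "hdg i y"] h by (simp add: Mx_def)
qed

lemma Mii_asym: "(\<lambda>y. inverse (hdg i y k) - (- 3 * \<i> / 2)) \<in> O[at_right 0](\<lambda>y. complex_of_real y)"
proof -
  have "inverse (2 * \<i> / 3) = - 3 * \<i> / 2" by (simp add: field_simps)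
  then show ?thesis using inv_asym(1)[OF hdg_asym[of i k]] by (simp add: mult.commute)
qed

lemma Mx_bounded: "(\<lambda>y. Mx i y $ k $ l) \<in> O[at_right 0](\<lambda>y. 1)"
proof (cases "k = l")
  case True
  then show ?thesis using diff_bounded[OF Mii_asym[of i k]] by (simp add: Mx_def)
next
  case False then show ?thesis by (simp add: Mx_def)
qed

lemma cM_bounded: "(\<lambda>y. cM (Mx i y) ps) \<in> O[at_right 0](\<lambda>y. 1)"
proof (induction ps)
  case Nil then show ?case by (simp add: cM_def)
next
  case (Cons p ps)
  have "(\<lambda>y. Mx i y $ fst p $ snd p * cM (Mx i y) ps) \<in> O[at_right 0](\<lambda>y. 1 * 1)"
    by (rule landau_o.big_mult[OF Mx_bounded Cons])
  then show ?case by (simp add: cM_def)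
qed


lemma cmul_O: "f \<in> O[F](g) \<Longrightarrow> (\<lambda>x. c * f x) \<in> O[F](g)"
  for f g :: "'a \<Rightarrow> complex"
  using landau_o.big_mult[OF bigo_const[of c F] ] by fastforce

definition hh :: "nat \<Rightarrow> nat \<Rightarrow> nat \<Rightarrow> 'm::finite \<Rightarrow> nat \<Rightarrow> real \<Rightarrow> real^'m \<Rightarrow> complex" where
  "hh n k1 k2 i \<mu> y x = (fP i y x - taylor2 (fP i y) x) ^ \<mu> * gA n k1 k2 i y x"

lemma Sm_hh: "Sm (hh n k1 k2 i \<mu>)"
  unfolding hh_def[abs_def]
  by (intro Sm_mult Sm_power Sm_diff Sm_fP Sm_taylor2 Sm_gA)

lemma ord_hh: "ord (hh n k1 k2 i \<mu>) (\<mu> * 3 + k2)"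
  unfolding hh_def[abs_def] by (intro ord_mult ord_power ord_fPT ord_gA)

lemma Dop_sum_O:
  fixes h :: "real \<Rightarrow> real^'m::finite \<Rightarrow> complex"
  assumes o: "ord h r" and le: "e \<le> r - 2 * t"
  shows "(\<lambda>y. (Dop (Mx i y) ^^ t) (h y) 0) \<in> O[at_right 0](\<lambda>y. complex_of_real y ^ e)"
proof -
  have S: "Sm h" using o ord_def by blast
  have ev: "eventually (\<lambda>y. (Dop (Mx i y) ^^ t) (h y) 0 = (\<Sum>ps\<in>LL t. cM (Mx i y) ps * Dl (flat ps) h y 0)) (at_right 0)"
    using ev_inR0 by (rule eventually_mono) (rule Dop_pow[OF S])
  have "(\<lambda>y. \<Sum>ps\<in>LL t. cM (Mx i y) ps * Dl (flat ps) h y 0) \<in> O[at_right 0](\<lambda>y. complex_of_real y ^ e)"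
  proof (rule big_sum_in_bigo)
    fix ps :: "('m \<times> 'm) list" assume ps: "ps \<in> LL t"
    have l: "length (flat ps) = 2 * t" using ps by (simp add: length_flat LL_def)
    have "(\<lambda>y. Dl (flat ps) h y 0) \<in> O[at_right 0](\<lambda>y. complex_of_real y ^ (r - length (flat ps)))"
      using o ord_def by blast
    then have "(\<lambda>y. Dl (flat ps) h y 0) \<in> O[at_right 0](\<lambda>y. complex_of_real y ^ e)"
      by (rule landau_o.big.trans[OF _ pow_mono]) (use l le in simp)
    from landau_o.big_mult[OF cM_bounded this]
    show "(\<lambda>y. cM (Mx i y) ps * Dl (flat ps) h y 0) \<in> O[at_right 0](\<lambda>y. complex_of_real y ^ e)" by simp
  qed
  then show ?thesis using landau_o.big.in_cong[OF ev] by simp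
qed

lemma flat_sub: "set (flat ps) \<subseteq> {i} \<longleftrightarrow> set ps \<subseteq> {(i,i)}"
  by (induction ps) (auto simp: flat_def)

lemma LL_rep: assumes ps: "ps \<in> LL j" shows "set ps \<subseteq> {(i,i)} \<longleftrightarrow> ps = replicate j (i,i)"
proof
  assume "set ps \<subseteq> {(i,i)}"
  then show "ps = replicate j (i,i)" using ps by (intro replicate_eqI) (auto simp: LL_def)
next
  assume "ps = replicate j (i,i)" then show "set ps \<subseteq> {(i,i)}" by auto
qed

lemma cM_rep: "cM M (replicate j (i,i)) = (M $ i $ i) ^ j"
  by (induction j) (auto simp: cM_def)

lemma term0:
  fixes i :: "'m::finite"
  assumes jk: "2 * j \<le> k2"
  shows "(\<lambda>y. (Dop (Mx i y) ^^ j) (hh n k1 k2 i 0 y) 0 - inverse (hdg i y i) ^ j * ph n k1 k2 i y 0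
          * (\<Prod>t<2*j. of_nat (k2 - t)) * (\<i> * complex_of_real y) ^ (k2 - 2*j))
        \<in> O[at_right 0](\<lambda>y. complex_of_real y ^ (k2 - 2*j + 1))"
proof -
  define G1 where "G1 = (\<lambda>y x. (ph n k1 k2 i y x - ph n k1 k2 i y 0) * Lk i i y x ^ k2)"
  define G2 where "G2 = (\<lambda>y x. 1 * Lk i i y x ^ k2)"
  define Pc where "Pc = (\<Prod>t<2*j. (of_nat (k2 - t) :: complex))"
  have oG1: "ord G1 (1 + k2)" unfolding G1_def by (intro ord_mult ord_ph_diff ord_L)
  have SG1: "Sm G1" using oG1 ord_def by blast
  have SG2: "Sm G2" unfolding G2_def by (rule Sm_Lpow)
  have Sc: "Sm (\<lambda>y x. ph n k1 k2 i y 0 * G2 y x)"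
    by (intro Sm_mult SG2 Sm_coef Sm_cont[OF Sm_ph]) simp
  have hh0: "hh n k1 k2 i 0 y x = G1 y x + ph n k1 k2 i y 0 * G2 y x" for y x
    by (simp add: hh_def gA_def G1_def G2_def algebra_simps)
  have A: "(\<lambda>y. (Dop (Mx i y) ^^ j) (G1 y) 0) \<in> O[at_right 0](\<lambda>y. complex_of_real y ^ (k2 - 2*j + 1))"
    by (rule Dop_sum_O[OF oG1]) (use jk in simp)
  have ev: "eventually (\<lambda>y. (Dop (Mx i y) ^^ j) (hh n k1 k2 i 0 y) 0 - inverse (hdg i y i) ^ j * ph n k1 k2 i y 0
          * Pc * (\<i> * complex_of_real y) ^ (k2 - 2*j) = (Dop (Mx i y) ^^ j) (G1 y) 0) (at_right 0)"
    using ev_inR0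
  proof (rule eventually_mono)
    fix y assume y: "inR y (0::real^'m)"
    have Shh: "Sm (hh n k1 k2 i 0)" by (rule Sm_hh)
    have "(Dop (Mx i y) ^^ j) (hh n k1 k2 i 0 y) 0 = (\<Sum>ps\<in>LL j. cM (Mx i y) ps * Dl (flat ps) (hh n k1 k2 i 0) y 0)"
      by (rule Dop_pow[OF Shh y])
    also have "\<dots> = (\<Sum>ps\<in>LL j. cM (Mx i y) ps * Dl (flat ps) G1 y 0)
        + ph n k1 k2 i y 0 * (\<Sum>ps\<in>LL j. cM (Mx i y) ps * Dl (flat ps) G2 y 0)"
    proof -
      have "Dl (flat ps) (hh n k1 k2 i 0) y 0 = Dl (flat ps) G1 y 0 + ph n k1 k2 i y 0 * Dl (flat ps) G2 y 0"
        for ps :: "('m \<times> 'm) list"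
      proof -
        have "Dl (flat ps) (hh n k1 k2 i 0) y 0 = Dl (flat ps) (\<lambda>y x. G1 y x + ph n k1 k2 i y 0 * G2 y x) y 0"
          by (rule Dl_cong[OF _ y]) (simp add: hh0)
        also have "\<dots> = Dl (flat ps) G1 y 0 + Dl (flat ps) (\<lambda>y x. ph n k1 k2 i y 0 * G2 y x) y 0"
          by (rule Dl_add[OF SG1 Sc y])
        also have "Dl (flat ps) (\<lambda>y x. ph n k1 k2 i y 0 * G2 y x) y 0 = ph n k1 k2 i y 0 * Dl (flat ps) G2 y 0"
          by (rule Dl_cmult[OF SG2 y])
        finally show ?thesis .
      qed
      then show ?thesis by (simp add: sum.distrib sum_distrib_left algebra_simps)
    qed
    also have "(\<Sum>ps\<in>LL j. cM (Mx i y) ps * Dl (flat ps) G2 y 0)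
        = (\<Sum>ps\<in>LL j. if ps = replicate j (i,i) then cM (Mx i y) ps * (Pc * Lk i i y 0 ^ (k2 - 2*j)) else 0)"
    proof (rule sum.cong[OF refl])
      fix ps :: "('m \<times> 'm) list" assume ps: "ps \<in> LL j"
      have l: "length (flat ps) = 2 * j" using ps by (simp add: length_flat LL_def)
      have "Dl (flat ps) G2 y 0 = (if set (flat ps) \<subseteq> {i} then 1 * (\<Prod>t<length (flat ps). of_nat (k2 - t)) * Lk i i y 0 ^ (k2 - length (flat ps)) else 0)"
        unfolding G2_def by (rule Dl_Lpow[OF y])
      then show "cM (Mx i y) ps * Dl (flat ps) G2 y 0 =
         (if ps = replicate j (i,i) then cM (Mx i y) ps * (Pc * Lk i i y 0 ^ (k2 - 2*j)) else 0)"
        using LL_rep[OF ps, of i] l by (simp add: flat_sub Pc_def length_flat)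
    qed
    also have "\<dots> = cM (Mx i y) (replicate j (i,i)) * (Pc * Lk i i y 0 ^ (k2 - 2*j))"
    proof -
      have "replicate j (i,i) \<in> LL j" by (simp add: LL_def)
      then show ?thesis by (subst sum.delta[OF finite_LL]) simp
    qed
    also have "cM (Mx i y) (replicate j (i,i)) = inverse (hdg i y i) ^ j"
      by (simp add: cM_rep Mx_def)
    also have "Lk i i y 0 = \<i> * complex_of_real y" by (simp add: Lk_i)
    also have "(\<Sum>ps\<in>LL j. cM (Mx i y) ps * Dl (flat ps) G1 y 0) = (Dop (Mx i y) ^^ j) (G1 y) 0"
      by (rule Dop_pow[OF SG1 y, symmetric])
    finally show "(Dop (Mx i y) ^^ j) (hh n k1 k2 i 0 y) 0 - inverse (hdg i y i) ^ j * ph n k1 k2 i y 0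
          * Pc * (\<i> * complex_of_real y) ^ (k2 - 2*j) = (Dop (Mx i y) ^^ j) (G1 y) 0"
      by (simp add: algebra_simps)
  qed
  show ?thesis using landau_o.big.in_cong[OF ev] A by (simp add: Pc_def)
qed


lemma ph0_eq: "ph n k1 k2 i y 0 = (-1)^k1 * \<i>^k2 * GA n k1 (- ((complex_of_real y)^2))"
  by (simp add: ph_def qf_0)

lemma main_y:
  fixes i :: "'m::finite"
  assumes jk: "2 * j \<le> k2"
  shows "(\<lambda>y. Lop j (fP i y) (gA n k1 k2 i y) -
      (inverse (\<i>^j) * ((-3*\<i>/2)^j * ((-1)^k1 * \<i>^k2)) * (\<Prod>t<2*j. of_nat (k2 - t)) * \<i>^(k2 - 2*j)
        / (2^j * fact j)) * complex_of_real y ^ (k2 - 2*j))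
     \<in> O[at_right 0](\<lambda>y. complex_of_real y ^ (k2 - 2*j + 1))"
proof -
  define d where "d = k2 - 2*j"
  define Pc where "Pc = (\<Prod>t<2*j. (of_nat (k2 - t) :: complex))"
  define A where "A = (-3*\<i>/2)^j * ((-1)^k1 * \<i>^k2 :: complex)"
  define Dn where "Dn = (\<lambda>\<mu>::nat. (2^(\<mu>+j) * fact \<mu> * fact (\<mu>+j) :: complex))"
  define T where "T = (\<lambda>\<mu> y. (Dop (Mx i y) ^^ (\<mu>+j)) (hh n k1 k2 i \<mu> y) 0)"
  define V where "V = (\<lambda>y. inverse (hdg i y i) ^ j * ph n k1 k2 i y 0 * Pc * (\<i> * complex_of_real y) ^ d)"
  have Dn0: "Dn 0 = 2^j * fact j" by (simp add: Dn_def)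
  have "(\<lambda>y. (Dop (Mx i y) ^^ j) (hh n k1 k2 i 0 y) 0 - inverse (hdg i y i) ^ j * ph n k1 k2 i y 0
          * (\<Prod>t<2*j. of_nat (k2 - t)) * (\<i> * complex_of_real y) ^ (k2 - 2*j))
        \<in> O[at_right 0](\<lambda>y. complex_of_real y ^ (k2 - 2*j + 1))"
    by (rule term0[OF jk])
  then have P1: "(\<lambda>y. T 0 y - V y) \<in> O[at_right 0](\<lambda>y. complex_of_real y ^ (d + 1))"
    by (simp add: T_def V_def Pc_def d_def)
  have P2: "(\<lambda>y. \<Sum>\<mu>\<in>{1..2*j}. T \<mu> y / Dn \<mu>) \<in> O[at_right 0](\<lambda>y. complex_of_real y ^ (d + 1))"
  proof (rule big_sum_in_bigo)
    fix \<mu> assume \<mu>: "\<mu> \<in> {1..2*j}"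
    have "(\<lambda>y. T \<mu> y) \<in> O[at_right 0](\<lambda>y. complex_of_real y ^ (d + 1))"
      unfolding T_def by (rule Dop_sum_O[OF ord_hh]) (use \<mu> jk in \<open>simp add: d_def; arith\<close>)
    from cmul_O[OF this, of "inverse (Dn \<mu>)"]
    show "(\<lambda>y. T \<mu> y / Dn \<mu>) \<in> O[at_right 0](\<lambda>y. complex_of_real y ^ (d + 1))"
      by (simp add: divide_inverse mult.commute)
  qed
  have aA: "(\<lambda>y. inverse (hdg i y i) ^ j * ph n k1 k2 i y 0 - A) \<in> O[at_right 0](\<lambda>y. complex_of_real y)"
  proof -
    have 1: "(\<lambda>y. inverse (hdg i y i) ^ j - (-3*\<i>/2)^j) \<in> O[at_right 0](\<lambda>y. complex_of_real y)"
      by (rule pow_asym[OF Mii_asym])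
    have "(\<lambda>y. ((-1)^k1 * \<i>^k2) * (GA n k1 (- ((complex_of_real y)^2)) - GA n k1 0)) \<in> O[at_right 0](\<lambda>y. complex_of_real y)"
      by (rule cmul_O[OF holo_Oy[OF GA_holo]])
    then have 2: "(\<lambda>y. ph n k1 k2 i y 0 - (-1)^k1 * \<i>^k2) \<in> O[at_right 0](\<lambda>y. complex_of_real y)"
      by (simp add: ph0_eq GA_0 algebra_simps)
    show ?thesis using mult_asym[OF 1 2] by (simp add: A_def)
  qed
  have P3: "(\<lambda>y. V y - A * Pc * \<i>^d * complex_of_real y ^ d) \<in> O[at_right 0](\<lambda>y. complex_of_real y ^ (d + 1))"
  proof -
    have "(\<lambda>y. (inverse (hdg i y i) ^ j * ph n k1 k2 i y 0 - A) * complex_of_real y ^ d)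
        \<in> O[at_right 0](\<lambda>y. complex_of_real y * complex_of_real y ^ d)"
      by (rule landau_o.big.mult_right[OF aA])
    from cmul_O[OF this, of "Pc * \<i>^d"]
    show ?thesis by (simp add: V_def algebra_simps power_mult_distrib)
  qed
  have ev: "eventually (\<lambda>y. Lop j (fP i y) (gA n k1 k2 i y) -
      (inverse (\<i>^j) * A * Pc * \<i>^d / (2^j * fact j)) * complex_of_real y ^ d
     = inverse (\<i>^j) * ((T 0 y - V y) / Dn 0 + (\<Sum>\<mu>\<in>{1..2*j}. T \<mu> y / Dn \<mu>)
        + (V y - A * Pc * \<i>^d * complex_of_real y ^ d) / Dn 0)) (at_right 0)"
    using M_ev[of i]
  proof (rule eventually_mono)
    fix y assume M: "matrix_inv (hess0 (fP i y)) = Mx i y"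
    have "Lop j (fP i y) (gA n k1 k2 i y) = inverse (\<i>^j) * (\<Sum>\<mu>=0..2*j. T \<mu> y / Dn \<mu>)"
      by (simp add: Lop_def M T_def Dn_def hh_def[abs_def])
    also have "(\<Sum>\<mu>=0..2*j. T \<mu> y / Dn \<mu>) = T 0 y / Dn 0 + (\<Sum>\<mu>\<in>{1..2*j}. T \<mu> y / Dn \<mu>)"
      by (simp add: sum.atLeast_Suc_atMost)
    finally show "Lop j (fP i y) (gA n k1 k2 i y) -
      (inverse (\<i>^j) * A * Pc * \<i>^d / (2^j * fact j)) * complex_of_real y ^ d
     = inverse (\<i>^j) * ((T 0 y - V y) / Dn 0 + (\<Sum>\<mu>\<in>{1..2*j}. T \<mu> y / Dn \<mu>)
        + (V y - A * Pc * \<i>^d * complex_of_real y ^ d) / Dn 0)"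
      by (simp add: Dn0 field_simps)
  qed
  have "(\<lambda>y. inverse (\<i>^j) * ((T 0 y - V y) / Dn 0 + (\<Sum>\<mu>\<in>{1..2*j}. T \<mu> y / Dn \<mu>)
        + (V y - A * Pc * \<i>^d * complex_of_real y ^ d) / Dn 0)) \<in> O[at_right 0](\<lambda>y. complex_of_real y ^ (d + 1))"
  proof -
    have a: "(\<lambda>y. (T 0 y - V y) / Dn 0) \<in> O[at_right 0](\<lambda>y. complex_of_real y ^ (d + 1))"
      using cmul_O[OF P1, of "inverse (Dn 0)"] by (simp add: divide_inverse mult.commute)
    have c: "(\<lambda>y. (V y - A * Pc * \<i>^d * complex_of_real y ^ d) / Dn 0) \<in> O[at_right 0](\<lambda>y. complex_of_real y ^ (d + 1))"
      using cmul_O[OF P3, of "inverse (Dn 0)"] by (simp add: divide_inverse mult.commute)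
    show ?thesis by (intro cmul_O sum_in_bigo(1) a P2 c)
  qed
  then have "(\<lambda>y. Lop j (fP i y) (gA n k1 k2 i y) -
      (inverse (\<i>^j) * A * Pc * \<i>^d / (2^j * fact j)) * complex_of_real y ^ d) \<in> O[at_right 0](\<lambda>y. complex_of_real y ^ (d + 1))"
    using landau_o.big.in_cong[OF ev] by simp
  then show ?thesis by (simp add: A_def Pc_def d_def mult.assoc)
qed


lemma real_to_complex_O:
  assumes "f \<in> O[F](g)"
  shows "(\<lambda>x. complex_of_real (f x)) \<in> O[F](\<lambda>x. complex_of_real (g x))"
proof -
  obtain c where c: "c > 0" "eventually (\<lambda>x. norm (f x) \<le> c * norm (g x)) F"
    using assms by (auto elim!: landau_o.bigE)
  show ?thesis by (rule bigoI[of _ c]) (use c(2) in simp)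
qed

lemma yomC: "(\<lambda>w. complex_of_real (yom w)) \<in> O[at_right 0](\<lambda>w. complex_of_real w)"
  using real_to_complex_O[OF yom_bigo] by simp

lemma yom_asymC: "(\<lambda>w. complex_of_real (yom w) - 3/2 * complex_of_real w) \<in> O[at_right 0](\<lambda>w. complex_of_real w ^ 2)"
  using real_to_complex_O[OF yom_asym] by simp

lemma powdiff:
  fixes a b :: "real \<Rightarrow> complex"
  assumes a: "a \<in> O[F](\<lambda>w. complex_of_real w)" and b: "b \<in> O[F](\<lambda>w. complex_of_real w)"
    and ab: "(\<lambda>w. a w - b w) \<in> O[F](\<lambda>w. complex_of_real w ^ 2)"
  shows "(\<lambda>w. a w ^ m - b w ^ m) \<in> O[F](\<lambda>w. complex_of_real w ^ (m + 1))"
proof (induction m)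
  case 0 then show ?case by simp
next
  case (Suc m)
  have 1: "(\<lambda>w. a w * (a w ^ m - b w ^ m)) \<in> O[F](\<lambda>w. complex_of_real w * complex_of_real w ^ (m + 1))"
    by (rule landau_o.big_mult[OF a Suc])
  have bm: "(\<lambda>w. b w ^ m) \<in> O[F](\<lambda>w. complex_of_real w ^ m)"
    by (rule landau_o.big_power[OF b])
  have 2: "(\<lambda>w. (a w - b w) * b w ^ m) \<in> O[F](\<lambda>w. complex_of_real w ^ 2 * complex_of_real w ^ m)"
    by (rule landau_o.big_mult[OF ab bm])
  have "(\<lambda>w. a w * (a w ^ m - b w ^ m) + (a w - b w) * b w ^ m) \<in> O[F](\<lambda>w. complex_of_real w ^ (Suc m + 1))"
    using 1 2 by (intro sum_in_bigo(1)) (simp_all add: power_add power2_eq_square mult_ac)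
  moreover have "a w * (a w ^ m - b w ^ m) + (a w - b w) * b w ^ m = a w ^ Suc m - b w ^ Suc m" for w
    by (simp add: algebra_simps)
  ultimately show ?case by simp
qed

lemma prod_fact: "m \<le> k \<Longrightarrow> (\<Prod>t<m. (of_nat (k - t) :: complex)) = fact k / fact (k - m)"
proof (induction m)
  case 0 then show ?case by simp
next
  case (Suc m)
  have km: "k - m = Suc (k - Suc m)" using Suc.prems by simp
  have "(\<Prod>t<Suc m. (of_nat (k - t) :: complex)) = fact k / fact (k - m) * of_nat (k - m)"
    using Suc by simp
  also have "\<dots> = fact k / fact (k - Suc m)"
  proof -
    have f: "(fact (k - m) :: complex) = of_nat (k - m) * fact (k - Suc m)"
      unfolding km by (simp only: fact_Suc of_nat_mult)
    have nz: "(of_nat (k - m) :: complex) \<noteq> 0" using km by simp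
    show ?thesis unfolding f using nz by (simp add: field_simps)
  qed
  finally show ?case .
qed


lemma const_identity:
  assumes jk: "2 * j \<le> k2"
  shows "4^j * (inverse (\<i>^j) * ((-3*\<i>/2)^j * ((-1)^k1 * \<i>^k2)) * (\<Prod>t<2*j. of_nat (k2 - t)) * \<i>^(k2 - 2*j)
        / (2^j * fact j)) * (3/2)^(k2 - 2*j) = complex_of_real (ccoef k1 k2 j)"
proof -
  obtain d where k2: "k2 = 2*j + d" using jk le_Suc_ex by blast
  have dd: "k2 - 2*j = d" and kj: "k2 - j = j + d" using k2 by auto
  define Pc where "Pc = (\<Prod>t<2*j. (of_nat (k2 - t) :: complex))"
  have Pc: "Pc = fact k2 / fact d" unfolding Pc_def using prod_fact[OF jk] dd by simp
  have i2: "\<i>^(2*m) = ((-1)::complex)^m" for m by (simp add: power_mult)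
  have e1: "(-3*\<i>/2)^j * inverse (\<i>^j) = (-3/2 :: complex)^j"
  proof -
    have "(-3*\<i>/2) = (-3/2) * \<i>" by simp
    then have "(-3*\<i>/2)^j = (-3/2)^j * \<i>^j" by (simp only: power_mult_distrib)
    then show ?thesis by simp
  qed
  have e2: "\<i>^k2 * \<i>^d = ((-1)::complex)^j * (-1)^d"
  proof -
    have "\<i>^k2 * \<i>^d = \<i>^(2*j) * (\<i>^d * \<i>^d)" unfolding k2 by (simp add: power_add mult_ac)
    also have "\<dots> = (-1)^j * (\<i> * \<i>)^d" by (simp only: i2 power_mult_distrib)
    finally show ?thesis by simp
  qed
  have e3: "(-3/2::complex)^j = (-1)^j * (3/2)^j"
    by (simp flip: power_mult_distrib)
  have e5: "((-1)::complex)^j * (-1)^j = 1"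
  proof -
    have "((-1)::complex)^j * (-1)^j = ((-1) * (-1))^j" by (simp only: power_mult_distrib)
    then show ?thesis by simp
  qed
  have e4: "(4::complex)^j * (3/2)^j / 2^j = 3^j"
  proof -
    have "(4::complex)^j * (3/2)^j / 2^j = (4 * (3/2) / 2)^j"
      by (simp only: power_mult_distrib[symmetric] power_divide[symmetric])
    also have "(4 * (3/2) / 2 :: complex) = 3" by simp
    finally show ?thesis .
  qed
  have st1: "4^j * (inverse (\<i>^j) * ((-3*\<i>/2)^j * ((-1)^k1 * \<i>^k2)) * Pc * \<i>^d / (2^j * fact j)) * (3/2)^d
      = (4^j * ((-3*\<i>/2)^j * inverse (\<i>^j)) / 2^j) * (-1)^k1 * (\<i>^k2 * \<i>^d) * Pc / fact j * (3/2)^d"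
    by (simp only: divide_inverse inverse_mult_distrib mult_ac)
  have st2: "\<dots> = (4^j * (3/2)^j / 2^j) * ((-1)^j * (-1)^j) * (-1)^k1 * (-1)^d * Pc / fact j * (3/2)^d"
    unfolding e1 e2 e3 by (simp only: divide_inverse mult_ac)
  have st3: "\<dots> = 3^j * (-1)^k1 * (-1)^d * Pc / fact j * (3/2)^d"
    unfolding e4 e5 by (simp only: mult_1_right)
  have s1: "((-1)::real)^(k1+k2) = (-1)^k1 * (-1)^d" using k2 by (simp add: power_add power_mult)
  have st4: "3^j * (-1)^k1 * (-1)^d * Pc / fact j * (3/2)^d = complex_of_real (ccoef k1 k2 j)"
  proof -
    have "complex_of_real (ccoef k1 k2 j) = complex_of_real ((-1)^k1 * (-1)^d * 3^(j+d) * fact k2 / (2^d * fact d * fact j))"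
      unfolding ccoef_def s1 kj dd ..
    also have "\<dots> = (-1)^k1 * (-1)^d * (3^j * 3^d) * fact k2 / (2^d * fact d * fact j)"
      by (simp add: power_add)
    also have "\<dots> = 3^j * (-1)^k1 * (-1)^d * Pc / fact j * (3/2)^d"
      unfolding Pc by (simp add: power_divide) (simp only: divide_inverse inverse_mult_distrib mult_ac)
    finally show ?thesis by simp
  qed
  show ?thesis unfolding Pc_def[symmetric] dd using trans[OF st1 trans[OF st2 trans[OF st3 st4]]] .
qed


theorem lemma4p7:
  fixes n k1 k2 j :: nat and i :: "'m::finite"
  assumes "n \<ge> 1" and "2*j \<le> k2"
  shows "(\<lambda>w::real. 4^j * Lop j (psi w i) (a_om n k1 k2 i w)
            - complex_of_real (ccoef k1 k2 j) * complex_of_real w ^ (k2 - 2*j))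
         \<in> O[at_right 0](\<lambda>w. complex_of_real w ^ (k2 - 2*j + 1))"
proof -
  define d where "d = k2 - 2*j"
  define C0 where "C0 = inverse (\<i>^j) * ((-3*\<i>/2)^j * ((-1)^k1 * \<i>^k2)) * (\<Prod>t<2*j. of_nat (k2 - t)) * \<i>^(k2 - 2*j)
        / (2^j * fact j)"
  define K where "K = (\<lambda>y. Lop j (fP i y) (gA n k1 k2 i y))"
  have MY: "(\<lambda>y. K y - C0 * complex_of_real y ^ d) \<in> O[at_right 0](\<lambda>y. complex_of_real y ^ (d + 1))"
    using main_y[OF assms(2), of i n k1] by (simp add: K_def C0_def d_def)
  have 1: "(\<lambda>w. K (yom w) - C0 * complex_of_real (yom w) ^ d) \<in> O[at_right 0](\<lambda>w. complex_of_real (yom w) ^ (d + 1))"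
    using landau_o.big.compose[OF MY yom_filterlim] by simp
  have 2: "(\<lambda>w. complex_of_real (yom w) ^ (d + 1)) \<in> O[at_right 0](\<lambda>w. complex_of_real w ^ (d + 1))"
    by (rule landau_o.big_power[OF yomC])
  have P1: "(\<lambda>w. 4^j * (K (yom w) - C0 * complex_of_real (yom w) ^ d)) \<in> O[at_right 0](\<lambda>w. complex_of_real w ^ (d + 1))"
    by (rule cmul_O[OF landau_o.big.trans[OF 1 2]])
  have bO: "(\<lambda>w. 3/2 * complex_of_real w) \<in> O[at_right 0](\<lambda>w. complex_of_real w)" by simp
  have PD: "(\<lambda>w. complex_of_real (yom w) ^ d - (3/2 * complex_of_real w) ^ d) \<in> O[at_right 0](\<lambda>w. complex_of_real w ^ (d + 1))"
    by (rule powdiff[OF yomC bO yom_asymC])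
  have P2: "(\<lambda>w. 4^j * C0 * (complex_of_real (yom w) ^ d - (3/2 * complex_of_real w) ^ d)) \<in> O[at_right 0](\<lambda>w. complex_of_real w ^ (d + 1))"
    by (rule cmul_O[OF PD])
  have id: "4^j * C0 * (3/2)^d = complex_of_real (ccoef k1 k2 j)"
    using const_identity[OF assms(2), of k1] by (simp add: C0_def d_def)
  have ev: "eventually (\<lambda>w. 4^j * Lop j (psi w i) (a_om n k1 k2 i w)
            - complex_of_real (ccoef k1 k2 j) * complex_of_real w ^ (k2 - 2*j)
        = 4^j * (K (yom w) - C0 * complex_of_real (yom w) ^ d)
          + 4^j * C0 * (complex_of_real (yom w) ^ d - (3/2 * complex_of_real w) ^ d)) (at_right 0)"
    using yom_ev
  proof (rule eventually_mono)
    fix w assume "0 < yom w \<and> yom w < 1 \<and> theta (yom w) = w \<and> yom w \<le> 2 * w"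
    then have th: "theta (yom w) = w" by blast
    have "4^j * Lop j (psi w i) (a_om n k1 k2 i w) = 4^j * K (yom w)"
      by (simp add: psi_eq[OF th] a_om_eq K_def)
    moreover have "complex_of_real (ccoef k1 k2 j) * complex_of_real w ^ (k2 - 2*j)
        = 4^j * C0 * (3/2 * complex_of_real w) ^ d"
      by (simp add: id[symmetric] d_def power_mult_distrib power_divide)
    ultimately show "4^j * Lop j (psi w i) (a_om n k1 k2 i w)
            - complex_of_real (ccoef k1 k2 j) * complex_of_real w ^ (k2 - 2*j)
        = 4^j * (K (yom w) - C0 * complex_of_real (yom w) ^ d)
          + 4^j * C0 * (complex_of_real (yom w) ^ d - (3/2 * complex_of_real w) ^ d)"
      by (simp add: algebra_simps)
  qed
  have "(\<lambda>w. 4^j * (K (yom w) - C0 * complex_of_real (yom w) ^ d)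
          + 4^j * C0 * (complex_of_real (yom w) ^ d - (3/2 * complex_of_real w) ^ d)) \<in> O[at_right 0](\<lambda>w. complex_of_real w ^ (d + 1))"
    by (rule sum_in_bigo(1)[OF P1 P2])
  then show ?thesis using landau_o.big.in_cong[OF ev] by (simp add: d_def)
qed

end
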